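(* Suppose the weights are $w_i=z_i\|\phi_i\|_{L^\infty}$, where $z_i\ge1$ and $z_i\to\infty$ as $i\to\infty$. For $0<\epsilon<1/2$, let the point set (with density $h>0$) and $M,R\in\mathbb N$ be such that $$E(h,M)<\epsilon,\qquad E(h,R)<\epsilon\frac{\min_{M<i\le R}\{w_i\}}{\max_{i=1,\dots,M}\{w_i\}},\qquad F(h,M,R)\le\frac{\epsilon}{\max_{i=1,\dots,M}\{w_i\}}.$$ Then there exists a constant $C(\epsilon)$ such that, whenever $\hat x$ is a minimizer of $\min_{z\in\mathbb C^K}\|z\|_{1,w}$ subject to $\|UP_Kz-y\|\le\eta$, $$\|x-\hat x\|\le C(\epsilon)\left[(1+\|P_Mw\|)\eta+\|P_M^\perp x\|_{1,w}+T_{h,K,\eta}(x)\right].$$ Moreover, $\lim_{\epsilon\to0^+}C(\epsilon)=4$.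
   Context: Setting: $D\subseteq\mathbb R^d$ a domain, $\nu\ge0$ integrable on $D$ with $\int_D\nu=1$, $\{\phi_i\}_{i\in\mathbb N}\subseteq L^2_\nu(D)\cap L^\infty(D)$ orthonormal in $L^2_\nu(D)$. $T=\{t_n\}_{n=1}^N\subseteq\overline D$ with density $h=\sup_{t\in D}\min_n|t-t_n|$, Voronoi cells $V_n=\{t\in D:|t-t_n|\le|t-t_m|\ \forall m\ne n\}$ and quadrature weights $\tau_n=\int_{V_n}\nu$. $W=\mathrm{diag}(w_1,w_2,\dots)$, $\|z\|_{1,w}=\sum_iw_i|z_i|$. $U$ is the $N\times\infty$ matrix $U_{n,i}=\sqrt{\tau_n}\phi_i(t_n)$. The target is $f=\sum_ix_i\phi_i$ with $x\in\ell^1_w(\mathbb N)$; data $y=\{\sqrt{\tau_n}(f(t_n)+e_n)\}_{n=1}^N$, $|e_n|\le\eta$. $P_M$ is the projection onto the first $M$ coordinates, $P_M^\perp=I-P_M$; $\mathbb C^K$ is identified with sequences supported in $\{1,\dots,K\}$; $P_Mw=(w_1,\dots,w_M)$ and $\|\cdot\|$ is the $\ell^2$ norm. $E_2(h,M)=\|P_M-P_MU^*UP_M\|$ ($\ell^2$ operator norm), $E_\infty(h,M)=\|P_M-P_MU^*UP_M\|_\infty$ ($\ell^\infty$ operator norm), $E(h,M)=\max\{E_2,E_\infty\}$, $F(h,M,R)=\|P_R^\perp W^{-1}U^*UP_M\|_\infty$. Finally $T_{h,K,\eta}(x)=\inf\{\|x-\bar x\|_{1,w}:\bar x\in\mathbb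 C^K,\ \|UP_K\bar x-y\|\le\eta\}$. *)

theory Defs
  imports "HOL-Analysis.Analysis"
begin

text \<open>Conventions: all index sets are 0-based. Basis functions are indexed by
 i = 0,1,2,...; the sample points by n = 0..N-1. Thus the paper's P_M (first M
 coordinates) is "i < M", and the paper's range M < i <= R becomes M <= i < R.\<close>

definition is_l2 :: "(nat \<Rightarrow> complex) \<Rightarrow> bool" where
  "is_l2 v \<longleftrightarrow> summable (\<lambda>i. (cmod (v i))\<^sup>2)"

definition seq_l2norm :: "(nat \<Rightarrow> complex) \<Rightarrow> real" where
  "seq_l2norm v = sqrt (\<Sum>i. (cmod (v i))\<^sup>2)"

definition is_linf :: "(nat \<Rightarrow> complex) \<Rightarrow> bool" where
  "is_linf v \<longleftrightarrow> bounded (range v)"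

definition seq_linfnorm :: "(nat \<Rightarrow> complex) \<Rightarrow> real" where
  "seq_linfnorm v = (SUP i. cmod (v i))"

definition wl1norm :: "(nat \<Rightarrow> real) \<Rightarrow> (nat \<Rightarrow> complex) \<Rightarrow> real" where
  "wl1norm w v = (\<Sum>i. w i * cmod (v i))"

definition opnorm_l2 :: "((nat \<Rightarrow> complex) \<Rightarrow> (nat \<Rightarrow> complex)) \<Rightarrow> real" where
  "opnorm_l2 A = Sup ((\<lambda>v. seq_l2norm (A v)) ` {v. is_l2 v \<and> seq_l2norm v \<le> 1})"

definition opnorm_linf :: "((nat \<Rightarrow> complex) \<Rightarrow> (nat \<Rightarrow> complex)) \<Rightarrow> real" where
  "opnorm_linf A = Sup ((\<lambda>v. seq_linfnorm (A v)) ` {v. is_linf v \<and> seq_linfnorm v \<le> 1})"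

text \<open>Identification of \<open>\<complex>^K\<close> with sequences supported in the first K coordinates.\<close>
definition supported_in :: "nat \<Rightarrow> (nat \<Rightarrow> complex) \<Rightarrow> bool" where
  "supported_in K v \<longleftrightarrow> (\<forall>i\<ge>K. v i = 0)"

definition pt_density :: "'a::euclidean_space set \<Rightarrow> nat \<Rightarrow> (nat \<Rightarrow> 'a) \<Rightarrow> ereal" where
  "pt_density D N t = (SUP s\<in>D. ereal (Min ((\<lambda>n. dist s (t n)) ` {..<N})))"

definition voronoi :: "'a::euclidean_space set \<Rightarrow> nat \<Rightarrow> (nat \<Rightarrow> 'a) \<Rightarrow> nat \<Rightarrow> 'a set" where
  "voronoi D N t n = {s \<in> D. \<forall>m<N. m \<noteq> n \<longrightarrow> dist s (t n) \<le> dist s (t m)}"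

definition qweight :: "'a::euclidean_space set \<Rightarrow> ('a \<Rightarrow> real) \<Rightarrow> nat \<Rightarrow> (nat \<Rightarrow> 'a) \<Rightarrow> nat \<Rightarrow> real" where
  "qweight D \<nu> N t n = (LINT s:voronoi D N t n|lebesgue. \<nu> s)"

definition Umat :: "'a::euclidean_space set \<Rightarrow> ('a \<Rightarrow> real) \<Rightarrow> (nat \<Rightarrow> 'a \<Rightarrow> complex)
    \<Rightarrow> nat \<Rightarrow> (nat \<Rightarrow> 'a) \<Rightarrow> nat \<Rightarrow> nat \<Rightarrow> complex" where
  "Umat D \<nu> \<phi> N t n i = complex_of_real (sqrt (qweight D \<nu> N t n)) * \<phi> i (t n)"

definition gram :: "(nat \<Rightarrow> nat \<Rightarrow> complex) \<Rightarrow> nat \<Rightarrow> nat \<Rightarrow> nat \<Rightarrow> complex" where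
  "gram U N i j = (\<Sum>n<N. cnj (U n i) * U n j)"

definition E2 :: "(nat \<Rightarrow> nat \<Rightarrow> complex) \<Rightarrow> nat \<Rightarrow> nat \<Rightarrow> real" where
  "E2 U N M = opnorm_l2 (\<lambda>v i. if i < M then v i - (\<Sum>j<M. gram U N i j * v j) else 0)"

definition Einf :: "(nat \<Rightarrow> nat \<Rightarrow> complex) \<Rightarrow> nat \<Rightarrow> nat \<Rightarrow> real" where
  "Einf U N M = opnorm_linf (\<lambda>v i. if i < M then v i - (\<Sum>j<M. gram U N i j * v j) else 0)"

definition Eq :: "(nat \<Rightarrow> nat \<Rightarrow> complex) \<Rightarrow> nat \<Rightarrow> nat \<Rightarrow> real" where
  "Eq U N M = max (E2 U N M) (Einf U N M)"

definition Fq :: "(nat \<Rightarrow> nat \<Rightarrow> complex) \<Rightarrow> nat \<Rightarrow> (nat \<Rightarrow> real) \<Rightarrow> nat \<Rightarrow> nat \<Rightarrow> real" where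
  "Fq U N w M R = opnorm_linf
     (\<lambda>v i. if R \<le> i then (\<Sum>j<M. gram U N i j * v j) / complex_of_real (w i) else 0)"

definition resid :: "(nat \<Rightarrow> nat \<Rightarrow> complex) \<Rightarrow> nat \<Rightarrow> nat \<Rightarrow> (nat \<Rightarrow> complex) \<Rightarrow> (nat \<Rightarrow> complex) \<Rightarrow> real" where
  "resid U N K z y = sqrt (\<Sum>n<N. (cmod ((\<Sum>i<K. U n i * z i) - y n))\<^sup>2)"

definition Tq :: "(nat \<Rightarrow> nat \<Rightarrow> complex) \<Rightarrow> nat \<Rightarrow> (nat \<Rightarrow> real) \<Rightarrow> nat \<Rightarrow> real
    \<Rightarrow> (nat \<Rightarrow> complex) \<Rightarrow> (nat \<Rightarrow> complex) \<Rightarrow> real" where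
  "Tq U N w K \<eta> y x = Inf {wl1norm w (\<lambda>i. x i - xb i) | xb. supported_in K xb \<and> resid U N K xb y \<le> \<eta>}"

definition is_wl1_minimizer :: "(nat \<Rightarrow> nat \<Rightarrow> complex) \<Rightarrow> nat \<Rightarrow> (nat \<Rightarrow> real) \<Rightarrow> nat \<Rightarrow> real
    \<Rightarrow> (nat \<Rightarrow> complex) \<Rightarrow> (nat \<Rightarrow> complex) \<Rightarrow> bool" where
  "is_wl1_minimizer U N w K \<eta> y xh \<longleftrightarrow>
     supported_in K xh \<and> resid U N K xh y \<le> \<eta> \<and>
     (\<forall>z. supported_in K z \<and> resid U N K z y \<le> \<eta> \<longrightarrow> wl1norm w xh \<le> wl1norm w z)"

text \<open>Sup norm of \<open>\<phi>_i\<close> (the functions are sampled pointwise on the closure of D).\<close>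
definition supnorm_on :: "'a set \<Rightarrow> ('a \<Rightarrow> complex) \<Rightarrow> real" where
  "supnorm_on S g = (SUP s\<in>S. cmod (g s))"

definition orthonormal_L2 :: "'a::euclidean_space set \<Rightarrow> ('a \<Rightarrow> real) \<Rightarrow> (nat \<Rightarrow> 'a \<Rightarrow> complex) \<Rightarrow> bool" where
  "orthonormal_L2 D \<nu> \<phi> \<longleftrightarrow> (\<forall>i j.
     set_integrable lebesgue D (\<lambda>s. complex_of_real (\<nu> s) * \<phi> i s * cnj (\<phi> j s)) \<and>
     (LINT s:D|lebesgue. complex_of_real (\<nu> s) * \<phi> i s * cnj (\<phi> j s)) = (if i = j then 1 else 0))"

end

theory Submission
  imports Defs
begin



lemma cert_exists:
  fixes G :: "nat \<Rightarrow> nat \<Rightarrow> complex" and c :: "nat \<Rightarrow> complex"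
  assumes eps: "0 \<le> eps" "eps < 1"
    and A2: "\<And>b m i. (\<And>j. j<M \<Longrightarrow> cmod (b j) \<le> m) \<Longrightarrow> i < M \<Longrightarrow> cmod (b i - (\<Sum>j<M. G i j * b j)) \<le> eps * m"
    and mc: "\<And>j. j < M \<Longrightarrow> cmod (c j) \<le> mc"
  shows "\<exists>a. \<forall>i<M. (\<Sum>j<M. G i j * a j) = c i"
proof -
  define T where "T = (\<lambda>(a::nat\<Rightarrow>complex) i. c i + a i - (\<Sum>j<M. G i j * a j))"
  define f where "f k = (T ^^ k) (\<lambda>_. 0)" for k
  define d where "d k i = f (Suc k) i - f k i" for k i
  have fS: "f (Suc k) = T (f k)" for k by (simp add: f_def)
  have d0: "d 0 = c" by (simp add: d_def f_def T_def fun_eq_iff)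
  have dS: "d (Suc k) i = d k i - (\<Sum>j<M. G i j * d k j)" for k i
    by (simp add: d_def fS T_def algebra_simps sum_subtractf sum.distrib)
  have dbound: "\<forall>j<M. cmod (d k j) \<le> eps ^ k * mc" for k
  proof (induction k)
    case 0 then show ?case using mc by (simp add: d0)
  next
    case (Suc k)
    show ?case using A2[of "d k" "eps ^ k * mc"] Suc by (auto simp: dS mult.assoc)
  qed
  have fsum: "f k i = (\<Sum>l<k. d l i)" for k i
    by (induction k) (auto simp: d_def f_def)
  have summ: "summable (\<lambda>l. d l i)" if "i < M" for i
  proof (rule summable_comparison_test)
    show "\<exists>N. \<forall>n\<ge>N. norm (d n i) \<le> eps ^ n * mc" using dbound that by auto
    show "summable (\<lambda>n. eps ^ n * mc)" using eps by (intro summable_mult2 summable_geometric) auto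
  qed
  define a where "a i = (\<Sum>l. d l i)" for i
  have lim: "(\<lambda>k. f k i) \<longlonglongrightarrow> a i" if "i < M" for i
    unfolding fsum a_def using summable_LIMSEQ[OF summ[OF that]] .
  have "(\<Sum>j<M. G i j * a j) = c i" if "i < M" for i
  proof -
    have l1: "(\<lambda>k. f (Suc k) i) \<longlonglongrightarrow> a i" using lim[OF that] by (rule LIMSEQ_Suc)
    have "(\<lambda>k. c i + f k i - (\<Sum>j<M. G i j * f k j)) \<longlonglongrightarrow> c i + a i - (\<Sum>j<M. G i j * a j)"
      using lim that by (intro tendsto_intros) auto
    then have l2: "(\<lambda>k. f (Suc k) i) \<longlonglongrightarrow> c i + a i - (\<Sum>j<M. G i j * a j)"
      by (simp add: fS T_def)
    from LIMSEQ_unique[OF l1 l2] show ?thesis by (simp add: algebra_simps)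
  qed
  then show ?thesis by blast
qed




lemma cs_complex:
  "cmod (\<Sum>n\<in>A. cnj (f n) * g n) \<le> L2_set (\<lambda>n. cmod (f n)) A * L2_set (\<lambda>n. cmod (g n)) A"
proof -
  have "cmod (\<Sum>n\<in>A. cnj (f n) * g n) \<le> (\<Sum>n\<in>A. cmod (cnj (f n) * g n))" by (rule norm_sum)
  also have "\<dots> = (\<Sum>n\<in>A. \<bar>cmod (f n)\<bar> * \<bar>cmod (g n)\<bar>)" by (simp add: norm_mult)
  also have "\<dots> \<le> L2_set (\<lambda>n. cmod (f n)) A * L2_set (\<lambda>n. cmod (g n)) A" by (rule L2_set_mult_ineq)
  finally show ?thesis .
qed

lemma ip_id:
  fixes G U :: "nat \<Rightarrow> nat \<Rightarrow> complex"
  assumes hG: "\<And>i j. G i j = (\<Sum>n<N. cnj (U n i) * U n j)"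
  shows "(\<Sum>i\<in>I. cnj (c i) * (\<Sum>j\<in>J. G i j * d j))
       = (\<Sum>n<N. cnj (\<Sum>i\<in>I. U n i * c i) * (\<Sum>j\<in>J. U n j * d j))"
proof -
  have "(\<Sum>i\<in>I. cnj (c i) * (\<Sum>j\<in>J. G i j * d j))
      = (\<Sum>i\<in>I. \<Sum>j\<in>J. \<Sum>n<N. cnj (c i) * cnj (U n i) * U n j * d j)"
    by (simp add: hG sum_distrib_left sum_distrib_right mult.assoc)
  also have "\<dots> = (\<Sum>n<N. \<Sum>i\<in>I. \<Sum>j\<in>J. cnj (c i) * cnj (U n i) * U n j * d j)"
    by (simp add: sum.swap[of _ _ "{..<N}"])
  also have "\<dots> = (\<Sum>n<N. cnj (\<Sum>i\<in>I. U n i * c i) * (\<Sum>j\<in>J. U n j * d j))"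
    by (simp add: sum_distrib_left sum_distrib_right mult_ac)
  finally show ?thesis .
qed

lemma L2_sq:
  assumes "finite A"
  shows "(L2_set (\<lambda>n. cmod (h n)) A)\<^sup>2 = Re (\<Sum>n\<in>A. cnj (h n) * h n)"
proof -
  have "(L2_set (\<lambda>n. cmod (h n)) A)\<^sup>2 = (\<Sum>n\<in>A. (cmod (h n))\<^sup>2)"
    unfolding L2_set_def by (simp add: sum_nonneg)
  also have "\<dots> = Re (\<Sum>n\<in>A. cnj (h n) * h n)"
    by (simp add: Re_sum complex_mult_cnj cmod_power2 mult.commute[of "cnj _"])
  finally show ?thesis .
qed




lemma sgn_facts: "cmod (sgn (z::complex)) \<le> 1" "cnj (sgn z) * z = of_real (cmod z)"
proof -
  show "cmod (sgn z) \<le> 1" by (cases "z = 0") (auto simp: norm_sgn)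
  show "cnj (sgn z) * z = of_real (cmod z)"
  proof (cases "z = 0")
    case False
    have "cnj (sgn z) * z = cnj z * z / of_real (cmod z)"
      by (simp add: sgn_div_norm complex_cnj_divide scaleR_conv_of_real divide_inverse mult_ac)
    also have "\<dots> = of_real ((cmod z)\<^sup>2) / of_real (cmod z)"
      using complex_norm_square[of z] by (simp add: mult.commute)
    also have "\<dots> = of_real (cmod z)" using False by (simp add: power2_eq_square)
    finally show ?thesis .
  qed simp
qed

lemma re_sgn_le: "Re (cnj (sgn (z::complex)) * u) \<le> cmod u"
proof -
  have "Re (cnj (sgn z) * u) \<le> cmod (cnj (sgn z) * u)" by (rule complex_Re_le_cmod)
  also have "\<dots> \<le> cmod u" using sgn_facts(1)[of z]
    by (simp add: norm_mult mult_left_le_one_le)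
  finally show ?thesis .
qed




lemma split_sum: "(M::nat) \<le> L \<Longrightarrow> sum f {..<L} = sum f {..<M} + sum f {M..<L}"
proof -
  assume "M \<le> L"
  then have "{..<L} = {..<M} \<union> {M..<L}" by auto
  moreover have "sum f ({..<M} \<union> {M..<L}) = sum f {..<M} + sum f {M..<L}"
    by (rule sum.union_disjoint) auto
  ultimately show ?thesis by simp
qed

lemma core_cone:
  fixes G U :: "nat \<Rightarrow> nat \<Rightarrow> complex" and w :: "nat \<Rightarrow> real" and M L :: nat and xh xb :: "nat \<Rightarrow> complex"
  assumes hG: "\<And>i j. G i j = (\<Sum>n<N. cnj (U n i) * U n j)"
    and eps: "0 < eps" "eps < 1/2"
    and hML: "0 < M" "M \<le> L"
    and w1: "\<And>i. 1 \<le> w i"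
    and mw: "\<And>j. j < M \<Longrightarrow> w j \<le> mw"
    and A1: "\<And>b. L2_set (\<lambda>i. cmod (b i - (\<Sum>j<M. G i j * b j))) {..<M} \<le> eps * L2_set (\<lambda>j. cmod (b j)) {..<M}"
    and A2: "\<And>b m i. (\<And>j. j<M \<Longrightarrow> cmod (b j) \<le> m) \<Longrightarrow> i < M \<Longrightarrow> cmod (b i - (\<Sum>j<M. G i j * b j)) \<le> eps * m"
    and A3: "\<And>b m i. (\<And>j. j<M \<Longrightarrow> cmod (b j) \<le> m) \<Longrightarrow> M \<le> i \<Longrightarrow> cmod (\<Sum>j<M. G i j * b j) \<le> eps / mw * w i * m"
    and res: "L2_set (\<lambda>n. cmod (\<Sum>i<L. U n i * (xh i - xb i))) {..<N} \<le> 2 * \<eta>"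
    and minim: "(\<Sum>i<L. w i * cmod (xh i)) \<le> (\<Sum>i<L. w i * cmod (xb i))"
  shows "(1 - 2*eps) * (\<Sum>i\<in>{M..<L}. w i * cmod (xh i - xb i))
           \<le> 2*(1-eps) * (\<Sum>i\<in>{M..<L}. w i * cmod (xb i)) + 2 * \<eta> * L2_set w {..<M}"
proof -
  define v where "v i = xh i - xb i" for i
  define A where "A = (\<Sum>i\<in>{M..<L}. w i * cmod (v i))"
  define B where "B = (\<Sum>i\<in>{M..<L}. w i * cmod (xb i))"
  define W2 where "W2 = L2_set w {..<M}"
  have w0: "0 \<le> w i" for i using w1[of i] by simp
  have mw1: "1 \<le> mw" using mw[of 0] w1[of 0] hML by simp
  have A0: "0 \<le> A" unfolding A_def using w0 by (intro sum_nonneg) simp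
  define c where "c i = complex_of_real (w i) * sgn (xb i)" for i
  have cb: "cmod (c j) \<le> w j" for j
    using sgn_facts(1)[of "xb j"] w0[of j] by (simp add: c_def norm_mult mult_left_le)
  have cbm: "cmod (c j) \<le> mw" if "j<M" for j using cb[of j] mw[OF that] by simp
  obtain a where ha: "\<forall>i<M. (\<Sum>j<M. G i j * a j) = c i"
    using cert_exists[of eps M G c mw] A2 eps cbm by fastforce
  define rho where "rho i = (\<Sum>j<M. G i j * a j)" for i
  have rhoc: "rho i = c i" if "i<M" for i using ha that by (simp add: rho_def)
  define ma where "ma = Max ((\<lambda>j. cmod (a j)) ` {..<M})"
  have ma_ge: "cmod (a j) \<le> ma" if "j<M" for j unfolding ma_def using that by (intro Max_ge) auto
  obtain j0 where j0: "j0 < M" "cmod (a j0) = ma"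
    using Max_in[of "(\<lambda>j. cmod (a j)) ` {..<M}"] hML unfolding ma_def by fastforce
  have "cmod (a j0 - c j0) \<le> eps * ma" using A2[of a ma j0] ma_ge j0 rhoc[OF j0(1)] by (simp add: rho_def)
  moreover have "cmod (a j0) \<le> cmod (a j0 - c j0) + cmod (c j0)" by (metis add.commute norm_triangle_sub)
  ultimately have "ma \<le> eps * ma + mw" using cbm[OF j0(1)] j0(2) by simp
  then have ma_bd: "ma \<le> mw / (1 - eps)" using eps by (simp add: field_simps)
  have ma0: "0 \<le> ma" using j0 by auto
  have rho_tail: "cmod (rho i) \<le> eps / (1 - eps) * w i" if "M \<le> i" for i
  proof -
    have "cmod (rho i) \<le> eps / mw * w i * ma" using A3[of a ma i] ma_ge that by (simp add: rho_def)
    also have "\<dots> \<le> eps / mw * w i * (mw / (1 - eps))"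
      using ma_bd eps mw1 w0[of i] by (intro mult_left_mono) auto
    also have "\<dots> = eps / (1 - eps) * w i" using mw1 eps by (simp add: field_simps)
    finally show ?thesis .
  qed
  define L2a where "L2a = L2_set (\<lambda>j. cmod (a j)) {..<M}"
  have "L2a \<le> L2_set (\<lambda>j. cmod (a j - c j) + cmod (c j)) {..<M}"
    unfolding L2a_def by (rule L2_set_mono) (auto, metis add.commute norm_triangle_sub)
  also have "\<dots> \<le> L2_set (\<lambda>j. cmod (a j - c j)) {..<M} + L2_set (\<lambda>j. cmod (c j)) {..<M}"
    by (rule L2_set_triangle_ineq)
  also have "L2_set (\<lambda>j. cmod (a j - c j)) {..<M} \<le> eps * L2a"
  proof -
    have "L2_set (\<lambda>j. cmod (a j - c j)) {..<M} = L2_set (\<lambda>i. cmod (a i - (\<Sum>j<M. G i j * a j))) {..<M}"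
      using ha by (intro L2_set_cong) auto
    then show ?thesis using A1[of a] by (simp add: L2a_def)
  qed
  also have L2c: "L2_set (\<lambda>j. cmod (c j)) {..<M} \<le> W2"
    unfolding W2_def by (rule L2_set_mono) (use cb in auto)
  finally have "L2a \<le> eps * L2a + W2" by simp
  then have L2a_bd: "L2a \<le> W2 / (1 - eps)" using eps by (simp add: field_simps)
  have W20: "0 \<le> W2" by (simp add: W2_def)
  define Ua where "Ua n = (\<Sum>j<M. U n j * a j)" for n
  have "(L2_set (\<lambda>n. cmod (Ua n)) {..<N})\<^sup>2 = Re (\<Sum>n<N. cnj (Ua n) * Ua n)" by (simp add: L2_sq)
  also have "\<dots> = Re (\<Sum>i<M. cnj (a i) * rho i)"
    unfolding Ua_def rho_def ip_id[OF hG] ..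
  also have "\<dots> = Re (\<Sum>i<M. cnj (a i) * c i)" using rhoc by simp
  also have "\<dots> \<le> cmod (\<Sum>i<M. cnj (a i) * c i)" by (rule complex_Re_le_cmod)
  also have "\<dots> \<le> L2a * L2_set (\<lambda>j. cmod (c j)) {..<M}" unfolding L2a_def by (rule cs_complex)
  also have "\<dots> \<le> W2 / (1 - eps) * W2"
    using L2a_bd L2c W20 eps by (intro mult_mono) (auto simp: L2a_def)
  also have "\<dots> \<le> (W2 / (1 - eps))\<^sup>2"
  proof -
    have "W2 \<le> W2 / (1 - eps)" using eps W20 by (simp add: le_divide_eq mult_left_le)
    then show ?thesis unfolding power2_eq_square using eps W20 by (intro mult_left_mono) auto
  qed
  finally have sqa: "(L2_set (\<lambda>n. cmod (Ua n)) {..<N})\<^sup>2 \<le> (W2 / (1 - eps))\<^sup>2" .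
  have L2Ua: "L2_set (\<lambda>n. cmod (Ua n)) {..<N} \<le> W2 / (1 - eps)"
    by (rule power2_le_imp_le[OF sqa]) (use eps W20 in simp)
  define Uv where "Uv n = (\<Sum>i<L. U n i * v i)" for n
  have L2Uv: "L2_set (\<lambda>n. cmod (Uv n)) {..<N} \<le> 2 * \<eta>" using res by (simp add: Uv_def v_def)
  have eta0: "0 \<le> \<eta>" using order_trans[OF L2_set_nonneg res] by simp
  have X: "cmod (\<Sum>i<L. cnj (v i) * rho i) \<le> 2 * \<eta> * (W2 / (1 - eps))"
  proof -
    have "cmod (\<Sum>i<L. cnj (v i) * rho i) = cmod (\<Sum>n<N. cnj (Uv n) * Ua n)"
      unfolding Uv_def Ua_def rho_def ip_id[OF hG] ..
    also have "\<dots> \<le> L2_set (\<lambda>n. cmod (Uv n)) {..<N} * L2_set (\<lambda>n. cmod (Ua n)) {..<N}"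
      by (rule cs_complex)
    also have "\<dots> \<le> 2 * \<eta> * (W2 / (1 - eps))"
      using L2Uv L2Ua eta0 by (intro mult_mono) auto
    finally show ?thesis .
  qed
  have pt1: "w i * cmod (xb i) + Re (cnj (v i) * rho i) \<le> w i * cmod (xh i)" if "i < M" for i
  proof -
    have "Re (cnj (v i) * rho i) = w i * Re (cnj (sgn (xb i)) * v i)"
    proof -
      have "Re (cnj (v i) * rho i) = Re (cnj (cnj (v i) * rho i))" by simp
      also have "\<dots> = Re (complex_of_real (w i) * (cnj (sgn (xb i)) * v i))"
        using rhoc[OF that] by (simp add: c_def mult_ac)
      finally show ?thesis by simp
    qed
    moreover have "cmod (xb i) + Re (cnj (sgn (xb i)) * v i) \<le> cmod (xh i)"
    proof -
      have "Re (cnj (sgn (xb i)) * xh i) \<le> cmod (xh i)" by (rule re_sgn_le)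
      moreover have "cnj (sgn (xb i)) * xh i = of_real (cmod (xb i)) + cnj (sgn (xb i)) * v i"
        using sgn_facts(2)[of "xb i"] by (simp add: v_def algebra_simps)
      ultimately show ?thesis by simp
    qed
    ultimately show ?thesis using w0[of i]
      by (metis distrib_left mult_left_mono)
  qed
  have pt2: "w i * cmod (v i) - w i * cmod (xb i) \<le> w i * cmod (xh i)" for i
  proof -
    have "cmod (v i) \<le> cmod (xh i) + cmod (xb i)" unfolding v_def by (rule norm_triangle_ineq4)
    then have "w i * cmod (v i) \<le> w i * (cmod (xh i) + cmod (xb i))" using w0[of i] by (rule mult_left_mono)
    then show ?thesis unfolding distrib_left by linarith
  qed
  have s1: "(\<Sum>i<M. w i * cmod (xb i)) + Re (\<Sum>i<M. cnj (v i) * rho i) \<le> (\<Sum>i<M. w i * cmod (xh i))"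
    using sum_mono[of "{..<M}", OF pt1] by (simp add: sum.distrib Re_sum)
  have s2: "A - B \<le> (\<Sum>i\<in>{M..<L}. w i * cmod (xh i))"
    using sum_mono[of "{M..<L}", OF pt2] by (simp add: A_def B_def sum_subtractf)
  have tot: "Re (\<Sum>i<M. cnj (v i) * rho i) + A \<le> 2 * B"
    using s1 s2 minim split_sum[OF hML(2), of "\<lambda>i. w i * cmod (xh i)"]
      split_sum[OF hML(2), of "\<lambda>i. w i * cmod (xb i)"] by (simp add: B_def)
  have tail: "cmod (\<Sum>i\<in>{M..<L}. cnj (v i) * rho i) \<le> eps / (1 - eps) * A"
  proof -
    have "cmod (\<Sum>i\<in>{M..<L}. cnj (v i) * rho i) \<le> (\<Sum>i\<in>{M..<L}. cmod (v i) * (eps / (1 - eps) * w i))"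
    proof (rule order_trans[OF norm_sum sum_mono])
      fix i assume "i \<in> {M..<L}"
      then have "M \<le> i" by simp
      show "cmod (cnj (v i) * rho i) \<le> cmod (v i) * (eps / (1 - eps) * w i)"
        unfolding norm_mult complex_mod_cnj by (intro mult_left_mono rho_tail[OF \<open>M \<le> i\<close>]) simp
    qed
    also have "\<dots> = eps / (1 - eps) * A" by (simp add: A_def sum_distrib_left mult_ac)
    finally show ?thesis .
  qed
  have "Re (\<Sum>i<L. cnj (v i) * rho i) = Re (\<Sum>i<M. cnj (v i) * rho i) + Re (\<Sum>i\<in>{M..<L}. cnj (v i) * rho i)"
    using split_sum[OF hML(2), of "\<lambda>i. cnj (v i) * rho i"] by simp
  moreover have "- cmod (\<Sum>i<L. cnj (v i) * rho i) \<le> Re (\<Sum>i<L. cnj (v i) * rho i)"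
    using abs_Re_le_cmod[of "\<Sum>i<L. cnj (v i) * rho i"] by linarith
  moreover have "Re (\<Sum>i\<in>{M..<L}. cnj (v i) * rho i) \<le> cmod (\<Sum>i\<in>{M..<L}. cnj (v i) * rho i)"
    by (rule complex_Re_le_cmod)
  ultimately have "A \<le> 2 * B + 2 * \<eta> * (W2 / (1 - eps)) + eps / (1 - eps) * A"
    using tot X tail by linarith
  then have "(1 - eps) * A \<le> (1 - eps) * (2 * B + 2 * \<eta> * (W2 / (1 - eps)) + eps / (1 - eps) * A)"
    using eps by (intro mult_left_mono) auto
  moreover have "(1 - eps) * (2 * B + 2 * \<eta> * (W2 / (1 - eps)) + eps / (1 - eps) * A)
      = 2 * (1 - eps) * B + 2 * \<eta> * W2 + eps * A"
  proof -
    have ne: "1 - eps \<noteq> 0" using eps by simp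
    have "(1 - eps) * (2 * \<eta> * (W2 / (1 - eps))) = 2 * \<eta> * W2" using ne by simp
    moreover have "(1 - eps) * (eps / (1 - eps) * A) = eps * A" using ne by simp
    ultimately show ?thesis by (simp add: distrib_left)
  qed
  moreover have "(1 - 2*eps) * A = (1 - eps) * A - eps * A" by (simp add: algebra_simps)
  ultimately have "(1 - 2*eps) * A \<le> 2*(1-eps)*B + 2*\<eta>*W2" by linarith
  then show ?thesis unfolding A_def B_def W2_def v_def .
qed




lemma core_b:
  fixes G U :: "nat \<Rightarrow> nat \<Rightarrow> complex" and w :: "nat \<Rightarrow> real" and M L :: nat and xh xb :: "nat \<Rightarrow> complex"
  assumes hG: "\<And>i j. G i j = (\<Sum>n<N. cnj (U n i) * U n j)"
    and eps: "0 < eps" "eps < 1/2"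
    and hML: "M \<le> L" and w0: "\<And>i. 0 \<le> w i"
    and A1: "\<And>b. L2_set (\<lambda>i. cmod (b i - (\<Sum>j<M. G i j * b j))) {..<M} \<le> eps * L2_set (\<lambda>j. cmod (b j)) {..<M}"
    and A4: "\<And>i. M \<le> i \<Longrightarrow> L2_set (\<lambda>j. cmod (G j i)) {..<M} \<le> eps * w i"
    and res: "L2_set (\<lambda>n. cmod (\<Sum>i<L. U n i * (xh i - xb i))) {..<N} \<le> 2 * \<eta>"
  shows "(1-eps) * L2_set (\<lambda>i. cmod (xh i - xb i)) {..<M} \<le> 4*\<eta> + eps * (\<Sum>i\<in>{M..<L}. w i * cmod (xh i - xb i))"
proof -
  define v where "v i = xh i - xb i" for i
  define A where "A = (\<Sum>i\<in>{M..<L}. w i * cmod (v i))"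
  define PV where "PV = L2_set (\<lambda>i. cmod (v i)) {..<M}"
  have PV0: "0 \<le> PV" by (simp add: PV_def)
  have eta0: "0 \<le> \<eta>" using order_trans[OF L2_set_nonneg res] by simp
  define r where "r i = v i - (\<Sum>j<M. G i j * v j)" for i
  have r_bd: "L2_set (\<lambda>i. cmod (r i)) {..<M} \<le> eps * PV" unfolding r_def PV_def by (rule A1)
  have vsplit: "(\<Sum>j<L. G i j * v j) = (\<Sum>j<M. G i j * v j) + (\<Sum>j\<in>{M..<L}. G i j * v j)" for i
    by (rule split_sum[OF hML])
  define T1 where "T1 = (\<Sum>i<M. cnj (v i) * r i)"
  define T2 where "T2 = (\<Sum>i<M. cnj (v i) * (\<Sum>j<L. G i j * v j))"
  define T3 where "T3 = (\<Sum>i<M. cnj (v i) * (\<Sum>j\<in>{M..<L}. G i j * v j))"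
  have key: "(\<Sum>i<M. cnj (v i) * v i) = T1 + T2 - T3"
    unfolding T1_def T2_def T3_def r_def vsplit
    by (simp add: algebra_simps sum.distrib sum_subtractf)
  have PVsq: "PV\<^sup>2 = Re (\<Sum>i<M. cnj (v i) * v i)" unfolding PV_def by (simp add: L2_sq)
  have hT1: "cmod T1 \<le> PV * (eps * PV)"
  proof -
    have "cmod T1 \<le> PV * L2_set (\<lambda>n. cmod (r n)) {..<M}"
      unfolding T1_def PV_def by (rule cs_complex)
    also have "\<dots> \<le> PV * (eps * PV)" by (rule mult_left_mono[OF r_bd PV0])
    finally show ?thesis .
  qed
  define Pv where "Pv n = (\<Sum>j<M. U n j * v j)" for n
  define Uv where "Uv n = (\<Sum>i<L. U n i * v i)" for n
  have T2eq: "T2 = (\<Sum>n<N. cnj (Pv n) * Uv n)" unfolding T2_def Pv_def Uv_def ip_id[OF hG] ..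
  have "(L2_set (\<lambda>n. cmod (Pv n)) {..<N})\<^sup>2 = Re (\<Sum>n<N. cnj (Pv n) * Pv n)" by (simp add: L2_sq)
  also have "\<dots> = Re (\<Sum>i<M. cnj (v i) * (\<Sum>j<M. G i j * v j))"
    unfolding Pv_def ip_id[OF hG] ..
  also have "\<dots> = Re (\<Sum>i<M. cnj (v i) * v i) - Re T1"
    unfolding T1_def r_def by (simp add: algebra_simps sum_subtractf)
  also have "\<dots> \<le> PV\<^sup>2 + PV * (eps * PV)"
    using PVsq hT1 abs_Re_le_cmod[of T1] by linarith
  also have "\<dots> \<le> (2 * PV)\<^sup>2"
  proof -
    have "PV * (eps * PV) \<le> PV * (3 * PV)" using eps PV0 by (intro mult_left_mono mult_right_mono) auto
    then show ?thesis by (simp add: power2_eq_square)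
  qed
  finally have sqp: "(L2_set (\<lambda>n. cmod (Pv n)) {..<N})\<^sup>2 \<le> (2 * PV)\<^sup>2" .
  have L2Pv: "L2_set (\<lambda>n. cmod (Pv n)) {..<N} \<le> 2 * PV"
    by (rule power2_le_imp_le[OF sqp]) (use PV0 in simp)
  have hT2: "cmod T2 \<le> 2 * PV * (2 * \<eta>)"
  proof -
    have "cmod T2 \<le> L2_set (\<lambda>n. cmod (Pv n)) {..<N} * L2_set (\<lambda>n. cmod (Uv n)) {..<N}"
      unfolding T2eq by (rule cs_complex)
    also have "\<dots> \<le> 2 * PV * (2 * \<eta>)"
      using L2Pv res PV0 by (intro mult_mono) (auto simp: Uv_def v_def)
    finally show ?thesis .
  qed
  have hT3: "cmod T3 \<le> PV * (eps * A)"
  proof -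
    have "T3 = (\<Sum>j\<in>{M..<L}. v j * (\<Sum>i<M. cnj (v i) * G i j))"
      unfolding T3_def by (simp add: sum_distrib_left sum_distrib_right mult_ac sum.swap[of _ "{M..<L}"])
    then have "cmod T3 \<le> (\<Sum>j\<in>{M..<L}. cmod (v j) * cmod (\<Sum>i<M. cnj (v i) * G i j))"
      by (simp add: order_trans[OF norm_sum] norm_mult)
    also have "\<dots> \<le> (\<Sum>j\<in>{M..<L}. cmod (v j) * (PV * (eps * w j)))"
    proof (intro sum_mono mult_left_mono)
      fix j assume "j \<in> {M..<L}"
      then have "M \<le> j" by simp
      have "cmod (\<Sum>i<M. cnj (v i) * G i j) \<le> PV * L2_set (\<lambda>i. cmod (G i j)) {..<M}"
        unfolding PV_def by (rule cs_complex)
      also have "\<dots> \<le> PV * (eps * w j)" using A4[OF \<open>M \<le> j\<close>] PV0 by (intro mult_left_mono) auto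
      finally show "cmod (\<Sum>i<M. cnj (v i) * G i j) \<le> PV * (eps * w j)" .
    qed simp
    also have "\<dots> = PV * (eps * A)" by (simp add: A_def sum_distrib_left mult_ac)
    finally show ?thesis .
  qed
  have "PV\<^sup>2 \<le> cmod T1 + cmod T2 + cmod T3"
  proof -
    have "PV\<^sup>2 = Re T1 + Re T2 - Re T3" using PVsq key by simp
    then show ?thesis using abs_Re_le_cmod[of T1] abs_Re_le_cmod[of T2] abs_Re_le_cmod[of T3] by linarith
  qed
  then have "PV * PV \<le> PV * (eps * PV + 4 * \<eta> + eps * A)"
    using hT1 hT2 hT3 by (simp add: power2_eq_square algebra_simps)
  then have "PV \<le> eps * PV + 4 * \<eta> + eps * A \<or> PV = 0"
    using PV0 by (metis le_less mult_le_cancel_left_pos)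
  moreover have "0 \<le> A" unfolding A_def using w0 by (intro sum_nonneg) simp
  ultimately have "(1 - eps) * PV \<le> 4 * \<eta> + eps * A" using eta0 eps by (auto simp: algebra_simps)
  then show ?thesis by (simp add: PV_def A_def v_def)
qed




lemma l2_fin:
  assumes "\<And>i. M \<le> i \<Longrightarrow> f i = 0"
  shows "seq_l2norm f = L2_set (\<lambda>i. cmod (f i)) {..<M}" "is_l2 f"
proof -
  have s: "(\<lambda>i. (cmod (f i))\<^sup>2) sums (\<Sum>i<M. (cmod (f i))\<^sup>2)"
    by (rule sums_finite) (use assms in auto)
  then show "seq_l2norm f = L2_set (\<lambda>i. cmod (f i)) {..<M}"
    unfolding seq_l2norm_def L2_set_def by (simp add: sums_unique[OF s, symmetric])
  show "is_l2 f" unfolding is_l2_def using s by (rule sums_summable)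
qed

lemma l2_coord:
  assumes "is_l2 v" shows "cmod (v j) \<le> seq_l2norm v"
proof -
  have "(\<Sum>i\<in>{j}. (cmod (v i))\<^sup>2) \<le> (\<Sum>i. (cmod (v i))\<^sup>2)"
    using assms unfolding is_l2_def by (intro sum_le_suminf) auto
  then show ?thesis unfolding seq_l2norm_def by (intro real_le_rsqrt) simp
qed

lemma linf_bdd: "is_linf v \<Longrightarrow> bdd_above (range (\<lambda>i. cmod (v i)))"
  unfolding is_linf_def bounded_iff bdd_above_def by auto

lemma linf_coord: "is_linf v \<Longrightarrow> cmod (v j) \<le> seq_linfnorm v"
  unfolding seq_linfnorm_def by (rule cSUP_upper[OF _ linf_bdd]) auto

lemma linf_fin:
  assumes "\<And>i. M \<le> i \<Longrightarrow> f i = 0" "\<And>i. i < M \<Longrightarrow> cmod (f i) \<le> m" "0 \<le> m"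
  shows "is_linf f" "seq_linfnorm f \<le> m"
proof -
  have "range f \<subseteq> f ` {..<M} \<union> {0}" using assms(1) by (auto, metis imageI lessThan_iff not_le)
  then show "is_linf f" unfolding is_linf_def
    by (meson bounded_subset finite_Un finite_imageI finite_imp_bounded finite_insert finite_lessThan
        infinite_super finite.emptyI)
  show "seq_linfnorm f \<le> m" unfolding seq_linfnorm_def
  proof (rule cSUP_least)
    fix x show "cmod (f x) \<le> m" using assms by (cases "x < M") auto
  qed simp
qed

lemma opnorm_l2_ge:
  assumes "\<And>v. is_l2 v \<Longrightarrow> seq_l2norm v \<le> 1 \<Longrightarrow> seq_l2norm (A v) \<le> Bd"
    and "is_l2 v" "seq_l2norm v \<le> 1"
  shows "seq_l2norm (A v) \<le> opnorm_l2 A"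
  unfolding opnorm_l2_def
  by (rule cSup_upper) (use assms in \<open>auto simp: bdd_above_def\<close>)

lemma opnorm_linf_ge:
  assumes "\<And>v i. is_linf v \<Longrightarrow> seq_linfnorm v \<le> 1 \<Longrightarrow> cmod (A v i) \<le> Bd"
    and "is_linf v" "seq_linfnorm v \<le> 1"
  shows "cmod (A v i) \<le> opnorm_linf A"
proof -
  have b: "seq_linfnorm (A u) \<le> Bd" if "is_linf u" "seq_linfnorm u \<le> 1" for u
    unfolding seq_linfnorm_def by (rule cSUP_least) (use assms(1) that in auto)
  have "cmod (A v i) \<le> seq_linfnorm (A v)"
    unfolding seq_linfnorm_def
    by (rule cSUP_upper) (use assms in \<open>auto simp: bdd_above_def\<close>)
  also have "\<dots> \<le> opnorm_linf A"
    unfolding opnorm_linf_def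
    by (rule cSup_upper) (use assms b in \<open>auto simp: bdd_above_def\<close>)
  finally show ?thesis .
qed




lemma L2_div: "0 < c \<Longrightarrow> L2_set (\<lambda>i. f i / c) A = L2_set f A / c"
  using L2_set_right_distrib[of "1/c" f A] by (simp add: field_simps)

lemma op_row_bound:
  fixes G :: "nat \<Rightarrow> nat \<Rightarrow> complex"
  assumes "\<And>j. j < M \<Longrightarrow> cmod (v j) \<le> 1"
  shows "cmod (v i - (\<Sum>j<M. G i j * v j)) \<le> cmod (v i) + (\<Sum>j<M. cmod (G i j))"
proof -
  have "cmod (\<Sum>j<M. G i j * v j) \<le> (\<Sum>j<M. cmod (G i j))"
    by (rule order_trans[OF norm_sum sum_mono]) (use assms in \<open>auto simp: norm_mult intro: mult_left_le\<close>)
  then show ?thesis by (meson add_left_mono norm_triangle_ineq4 order_trans)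
qed

lemma E2_bound:
  fixes G :: "nat \<Rightarrow> nat \<Rightarrow> complex"
  shows "L2_set (\<lambda>i. cmod (b i - (\<Sum>j<M. G i j * b j))) {..<M}
     \<le> opnorm_l2 (\<lambda>v i. if i < M then v i - (\<Sum>j<M. G i j * v j) else 0) * L2_set (\<lambda>j. cmod (b j)) {..<M}"
proof -
  define opA where "opA = (\<lambda>(v::nat\<Rightarrow>complex) i. if i < M then v i - (\<Sum>j<M. G i j * v j) else 0)"
  define nb where "nb = L2_set (\<lambda>j. cmod (b j)) {..<M}"
  have nb0: "0 \<le> nb" by (simp add: nb_def)
  show ?thesis
  proof (cases "nb = 0")
    case True
    then have "\<forall>j\<in>{..<M}. cmod (b j) = 0" unfolding nb_def by (simp add: L2_set_eq_0_iff)
    then have "L2_set (\<lambda>i. cmod (b i - (\<Sum>j<M. G i j * b j))) {..<M} = 0"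
      by (intro L2_set_0') auto
    then show ?thesis using True by (simp add: nb_def)
  next
    case False
    then have nbp: "0 < nb" using nb0 by simp
    define v where "v j = (if j < M then b j / of_real nb else 0)" for j
    have vl2: "seq_l2norm v = L2_set (\<lambda>i. cmod (v i)) {..<M}" "is_l2 v"
      by (rule l2_fin[where M=M]; simp add: v_def)+
    have "L2_set (\<lambda>i. cmod (v i)) {..<M} = L2_set (\<lambda>i. cmod (b i) / nb) {..<M}"
      using nbp by (intro L2_set_cong) (auto simp: v_def norm_divide)
    also have "\<dots> = 1" using nbp by (simp add: L2_div nb_def)
    finally have vn: "seq_l2norm v = 1" using vl2 by simp
    have Av: "opA v i = (if i < M then (b i - (\<Sum>j<M. G i j * b j)) / of_real nb else 0)" for i
      by (simp add: opA_def v_def diff_divide_distrib sum_divide_distrib)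
    have "seq_l2norm (opA v) = L2_set (\<lambda>i. cmod (opA v i)) {..<M}"
      by (rule l2_fin) (simp add: opA_def)
    also have "\<dots> = L2_set (\<lambda>i. cmod (b i - (\<Sum>j<M. G i j * b j)) / nb) {..<M}"
      using nbp by (intro L2_set_cong) (auto simp: Av norm_divide)
    also have "\<dots> = L2_set (\<lambda>i. cmod (b i - (\<Sum>j<M. G i j * b j))) {..<M} / nb"
      using nbp by (simp add: L2_div)
    finally have eq: "seq_l2norm (opA v) = L2_set (\<lambda>i. cmod (b i - (\<Sum>j<M. G i j * b j))) {..<M} / nb" .
    have unif: "seq_l2norm (opA u) \<le> (\<Sum>i<M. 1 + (\<Sum>j<M. cmod (G i j)))"
      if "is_l2 u" "seq_l2norm u \<le> 1" for u
    proof -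
      have u1: "cmod (u j) \<le> 1" for j using l2_coord[OF that(1), of j] that(2) by simp
      have "seq_l2norm (opA u) = L2_set (\<lambda>i. cmod (opA u i)) {..<M}"
        by (rule l2_fin) (simp add: opA_def)
      also have "\<dots> \<le> (\<Sum>i<M. cmod (opA u i))" by (rule L2_set_le_sum) simp
      also have "\<dots> \<le> (\<Sum>i<M. 1 + (\<Sum>j<M. cmod (G i j)))"
      proof (rule sum_mono)
        fix i assume "i \<in> {..<M}"
        then show "cmod (opA u i) \<le> 1 + (\<Sum>j<M. cmod (G i j))"
          using op_row_bound[of M u i G] u1 by (auto simp: opA_def intro: order_trans)
      qed
      finally show ?thesis .
    qed
    have "seq_l2norm (opA v) \<le> opnorm_l2 opA"
      by (rule opnorm_l2_ge[OF unif]) (use vl2 vn in auto)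
    then have "L2_set (\<lambda>i. cmod (b i - (\<Sum>j<M. G i j * b j))) {..<M} / nb \<le> opnorm_l2 opA" using eq by simp
    then show ?thesis using nbp by (simp add: opA_def nb_def divide_le_eq mult.commute)
  qed
qed

lemma Einf_bound:
  fixes G :: "nat \<Rightarrow> nat \<Rightarrow> complex"
  assumes bm: "\<And>j. j < M \<Longrightarrow> cmod (b j) \<le> m" and i: "i < M"
  shows "cmod (b i - (\<Sum>j<M. G i j * b j))
     \<le> opnorm_linf (\<lambda>v i. if i < M then v i - (\<Sum>j<M. G i j * v j) else 0) * m"
proof -
  define opA where "opA = (\<lambda>(v::nat\<Rightarrow>complex) i. if i < M then v i - (\<Sum>j<M. G i j * v j) else 0)"
  have m0: "0 \<le> m" using bm[OF i] norm_ge_zero order_trans by blast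
  show ?thesis
  proof (cases "m = 0")
    case True
    then have "b j = 0" if "j < M" for j using bm[OF that] by simp
    then show ?thesis using True i by simp
  next
    case False
    then have mp: "0 < m" using m0 by simp
    define v where "v j = (if j < M then b j / of_real m else 0)" for j
    have vb: "cmod (v j) \<le> 1" if "j < M" for j
      using bm[OF that] mp that by (simp add: v_def norm_divide divide_le_eq)
    have vz: "\<And>i. M \<le> i \<Longrightarrow> v i = 0" by (simp add: v_def)
    have vl: "is_linf v" "seq_linfnorm v \<le> 1"
      using linf_fin[of M v 1, OF vz vb] by auto
    have unif: "cmod (opA u k) \<le> 1 + (\<Sum>i<M. \<Sum>j<M. cmod (G i j))"
      if "is_linf u" "seq_linfnorm u \<le> 1" for u k
    proof (cases "k < M")
      case True
      have u1: "cmod (u j) \<le> 1" for j using linf_coord[OF that(1), of j] that(2) by simp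
      have "(\<Sum>j<M. cmod (G k j)) \<le> (\<Sum>i<M. \<Sum>j<M. cmod (G i j))"
        using True by (intro member_le_sum) (auto intro: sum_nonneg)
      then have "cmod (u k - (\<Sum>j<M. G k j * u j)) \<le> 1 + (\<Sum>i<M. \<Sum>j<M. cmod (G i j))"
        using op_row_bound[of M u k G, OF u1] u1[of k] by linarith
      then show ?thesis using True by (simp add: opA_def)
    next
      case False then show ?thesis by (simp add: opA_def sum_nonneg add_nonneg_nonneg)
    qed
    have "cmod (opA v i) \<le> opnorm_linf opA" by (rule opnorm_linf_ge[OF unif vl])
    moreover have "opA v i = (b i - (\<Sum>j<M. G i j * b j)) / of_real m"
      using i by (simp add: opA_def v_def diff_divide_distrib sum_divide_distrib)
    ultimately have "cmod (b i - (\<Sum>j<M. G i j * b j)) / m \<le> opnorm_linf opA" using mp by (simp add: norm_divide)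
    then show ?thesis using mp by (simp add: opA_def divide_le_eq mult.commute)
  qed
qed

lemma F_bound:
  fixes G :: "nat \<Rightarrow> nat \<Rightarrow> complex" and w :: "nat \<Rightarrow> real"
  assumes wpos: "\<And>i. 0 < w i" and GB: "\<And>i j. j < M \<Longrightarrow> cmod (G i j) \<le> Bnd * w i" and BndNN: "0 \<le> Bnd"
    and bm: "\<And>j. j < M \<Longrightarrow> cmod (b j) \<le> m" and m0: "0 \<le> m" and i: "R \<le> i"
  shows "cmod (\<Sum>j<M. G i j * b j)
     \<le> opnorm_linf (\<lambda>v i. if R \<le> i then (\<Sum>j<M. G i j * v j) / complex_of_real (w i) else 0) * w i * m"
proof -
  define opF where "opF = (\<lambda>(v::nat\<Rightarrow>complex) i. if R \<le> i then (\<Sum>j<M. G i j * v j) / complex_of_real (w i) else 0)"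
  show ?thesis
  proof (cases "m = 0")
    case True
    then have "b j = 0" if "j < M" for j using bm[OF that] by simp
    then show ?thesis using True by simp
  next
    case False
    then have mp: "0 < m" using m0 by simp
    define v where "v j = (if j < M then b j / of_real m else 0)" for j
    have vb: "cmod (v j) \<le> 1" if "j < M" for j
      using bm[OF that] mp that by (simp add: v_def norm_divide divide_le_eq)
    have vz: "\<And>i. M \<le> i \<Longrightarrow> v i = 0" by (simp add: v_def)
    have vl: "is_linf v" "seq_linfnorm v \<le> 1"
      using linf_fin[of M v 1, OF vz vb] by auto
    have unif: "cmod (opF u k) \<le> of_nat M * Bnd"
      if "is_linf u" "seq_linfnorm u \<le> 1" for u k
    proof (cases "R \<le> k")
      case True
      have u1: "cmod (u j) \<le> 1" for j using linf_coord[OF that(1), of j] that(2) by simp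
      have "cmod (\<Sum>j<M. G k j * u j) \<le> (\<Sum>j<M. Bnd * w k)"
        by (rule order_trans[OF norm_sum sum_mono])
           (use u1 GB in \<open>auto simp: norm_mult intro: mult_le_one order_trans[OF mult_left_le]\<close>)
      then have "cmod (\<Sum>j<M. G k j * u j) / w k \<le> of_nat M * Bnd"
        using wpos[of k] by (simp add: divide_le_eq)
      then show ?thesis using True wpos[of k] by (simp add: opF_def norm_divide)
    next
      case False then show ?thesis using BndNN by (simp add: opF_def)
    qed
    have "cmod (opF v i) \<le> opnorm_linf opF" by (rule opnorm_linf_ge[OF unif vl])
    moreover have "opF v i = (\<Sum>j<M. G i j * b j) / of_real m / of_real (w i)"
      using i by (simp add: opF_def v_def sum_divide_distrib)
    ultimately have "cmod (\<Sum>j<M. G i j * b j) / (m * w i) \<le> opnorm_linf opF"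
      using wpos[of i] mp by (simp add: norm_divide norm_mult)
    then show ?thesis using mp wpos[of i] by (simp add: opF_def divide_le_eq mult_ac)
  qed
qed




lemma supnorm_ge1:
  fixes D :: "'a::euclidean_space set"
  assumes bd: "bounded (\<phi> i ` closure D)" and on: "orthonormal_L2 D \<nu> \<phi>"
    and nu0: "\<forall>s\<in>D. 0 \<le> \<nu> s" and nuint: "set_integrable lebesgue D \<nu>"
    and nu1: "(LINT s:D|lebesgue. \<nu> s) = 1" and Dne: "D \<noteq> {}"
  shows "1 \<le> supnorm_on (closure D) (\<phi> i)"
proof -
  define c where "c = supnorm_on (closure D) (\<phi> i)"
  have bdd: "bdd_above ((\<lambda>s. cmod (\<phi> i s)) ` closure D)"
    using bd unfolding bounded_iff bdd_above_def by fastforce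
  have cge: "cmod (\<phi> i s) \<le> c" if "s \<in> D" for s
    unfolding c_def supnorm_on_def using that closure_subset
    by (intro cSUP_upper[OF _ bdd]) auto
  define g where "g s = \<nu> s * (cmod (\<phi> i s))\<^sup>2" for s
  have hfun: "complex_of_real (\<nu> s) * \<phi> i s * cnj (\<phi> i s) = complex_of_real (g s)" for s
    using complex_norm_square[of "\<phi> i s"] by (simp add: g_def mult.assoc)
  have hf: "(\<lambda>s. complex_of_real (\<nu> s) * \<phi> i s * cnj (\<phi> i s)) = (\<lambda>s. complex_of_real (g s))"
    using hfun by auto
  have oi: "set_integrable lebesgue D (\<lambda>s. complex_of_real (\<nu> s) * \<phi> i s * cnj (\<phi> i s))"
    "(LINT s:D|lebesgue. complex_of_real (\<nu> s) * \<phi> i s * cnj (\<phi> i s)) = 1"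
    using on[unfolded orthonormal_L2_def, rule_format, of i i] by simp_all
  have ci: "set_integrable lebesgue D (\<lambda>s. complex_of_real (g s))" using oi(1) unfolding hf .
  have cv: "(LINT s:D|lebesgue. complex_of_real (g s)) = 1" using oi(2) unfolding hf .
  have gi: "set_integrable lebesgue D g"
  proof -
    have e1: "(\<lambda>x. indicator D x *\<^sub>R complex_of_real (g x)) = (\<lambda>x. complex_of_real (indicator D x * g x))"
      by (auto simp: fun_eq_iff indicator_def)
    from ci have "integrable lebesgue (\<lambda>x. complex_of_real (indicator D x * g x))"
      unfolding set_integrable_def e1 .
    then have "integrable lebesgue (\<lambda>x. indicator D x * g x)" by (simp only: complex_of_real_integrable_eq)
    then show ?thesis unfolding set_integrable_def by simp
  qed
  have g1: "(LINT s:D|lebesgue. g s) = 1"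
    using cv by (simp add: set_integral_complex_of_real)
  have "(LINT s:D|lebesgue. g s) \<le> (LINT s:D|lebesgue. \<nu> s * c\<^sup>2)"
  proof (rule set_integral_mono[OF gi])
    show "set_integrable lebesgue D (\<lambda>s. \<nu> s * c\<^sup>2)" using nuint by simp
    fix s assume "s \<in> D"
    then show "g s \<le> \<nu> s * c\<^sup>2" unfolding g_def using nu0 cge[of s]
      by (intro mult_left_mono power_mono) auto
  qed
  then have "1 \<le> c\<^sup>2" using g1 nu1 by simp
  moreover have "0 \<le> c" using Dne cge by (meson equals0I norm_ge_zero order_trans)
  ultimately show ?thesis unfolding c_def[symmetric] by (metis abs_of_nonneg one_le_power real_sqrt_abs real_sqrt_le_mono real_sqrt_one power2_eq_square)
qed




lemma l2_split_bound:
  fixes u :: "nat \<Rightarrow> complex"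
  assumes su: "summable (\<lambda>i. cmod (u i))"
  shows "seq_l2norm u \<le> L2_set (\<lambda>i. cmod (u i)) {..<M} + (\<Sum>i. if i < M then 0 else cmod (u i))"
proof -
  define t where "t i = (if i < M then 0 else cmod (u i))" for i
  define h where "h i = (if i < M then (cmod (u i))\<^sup>2 else 0)" for i
  have tle: "t i \<le> cmod (u i)" for i by (simp add: t_def)
  have st: "summable t" by (rule summable_comparison_test[OF _ su]) (auto simp: t_def)
  define S where "S = suminf t"
  have t0: "0 \<le> t i" for i by (simp add: t_def)
  have tS: "t i \<le> S" for i
    using sum_le_suminf[OF st, of "{i}"] t0 by (simp add: S_def)
  have S0: "0 \<le> S" using tS t0 order_trans by blast
  have st2: "summable (\<lambda>i. (t i)\<^sup>2)"
    by (rule summable_comparison_test[OF _ summable_mult[OF st, of S]])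
       (use tS t0 in \<open>auto simp: power2_eq_square intro!: mult_right_mono\<close>)
  have sumt2: "(\<Sum>i. (t i)\<^sup>2) \<le> S * S"
  proof -
    have "(\<Sum>i. (t i)\<^sup>2) \<le> (\<Sum>i. S * t i)"
      by (rule suminf_le) (use tS t0 st st2 in \<open>auto simp: power2_eq_square intro!: mult_right_mono summable_mult\<close>)
    also have "\<dots> = S * S" by (simp add: suminf_mult[OF st] S_def)
    finally show ?thesis .
  qed
  have "h sums (\<Sum>i<M. h i)" by (rule sums_finite) (auto simp: h_def)
  moreover have "(\<Sum>i<M. h i) = (\<Sum>i<M. (cmod (u i))\<^sup>2)" by (simp add: h_def)
  ultimately have hs: "h sums (\<Sum>i<M. (cmod (u i))\<^sup>2)" by simp
  have eq: "(\<lambda>i. (cmod (u i))\<^sup>2) = (\<lambda>i. h i + (t i)\<^sup>2)" by (auto simp: h_def t_def fun_eq_iff)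
  have "(\<Sum>i. (cmod (u i))\<^sup>2) = (\<Sum>i<M. (cmod (u i))\<^sup>2) + (\<Sum>i. (t i)\<^sup>2)"
  proof -
    have "(\<Sum>i. (cmod (u i))\<^sup>2) = (\<Sum>i. h i + (t i)\<^sup>2)" by (simp only: eq)
    also have "\<dots> = suminf h + (\<Sum>i. (t i)\<^sup>2)" using suminf_add[OF sums_summable[OF hs] st2] by simp
    finally show ?thesis using sums_unique[OF hs] by simp
  qed
  also have "\<dots> \<le> (L2_set (\<lambda>i. cmod (u i)) {..<M})\<^sup>2 + S\<^sup>2"
    using sumt2 by (simp add: L2_set_def sum_nonneg power2_eq_square)
  finally have "seq_l2norm u \<le> sqrt ((L2_set (\<lambda>i. cmod (u i)) {..<M})\<^sup>2 + S\<^sup>2)"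
    unfolding seq_l2norm_def by simp
  also have "\<dots> \<le> L2_set (\<lambda>i. cmod (u i)) {..<M} + S"
    using S0 by (intro real_le_lsqrt) (auto simp: power2_eq_square algebra_simps)
  finally show ?thesis unfolding S_def t_def[abs_def] .
qed




lemma final_arith:
  fixes e \<eta> W2 A P T' PV B err :: real
  assumes e: "0<e" "e<1/2" and nn: "0 \<le> \<eta>" "0 \<le> W2" "0 \<le> A" "0 \<le> P" "0 \<le> T'"
    and a: "(1-2*e)*A \<le> 2*(1-e)*B + 2*\<eta>*W2" and b: "(1-e)*PV \<le> 4*\<eta> + e*A"
    and c: "err \<le> T' + PV + A" and d: "B \<le> P + T'"
  shows "err \<le> 4/(1-2*e)^2 * ((1+W2)*\<eta> + P + T')"
proof -
  define k where "k = 1/(1-2*e)"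
  have k1: "1 \<le> k" using e by (simp add: k_def)
  have kpos: "0 < k" using k1 by simp
  have "(1-e)*B \<le> P + T'"
  proof -
    have "(1-e)*B \<le> (1-e)*(P+T')" using d e by (intro mult_left_mono) auto
    also have "\<dots> \<le> P + T'" using e nn by (simp add: algebra_simps)
    finally show ?thesis .
  qed
  moreover have "2*(1-e)*B = 2*((1-e)*B)" by (simp add: mult.assoc)
  ultimately have "(1-2*e)*A \<le> 2*(P+T') + 2*\<eta>*W2" using a by (smt (verit))
  then have h1: "A \<le> k*(2*(P+T') + 2*\<eta>*W2)" using e by (simp add: k_def field_simps)
  have "(1-e)*(PV+A) \<le> 4*\<eta> + A" using b by (simp add: algebra_simps)
  then have "PV + A \<le> (4*\<eta> + A)/(1-e)" using e by (simp add: field_simps)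
  also have "\<dots> \<le> k*(4*\<eta> + A)"
  proof -
    have kk: "1/(1-e) \<le> k" using e unfolding k_def by (intro divide_left_mono) auto
    have "(4*\<eta> + A)/(1-e) = (4*\<eta> + A) * (1/(1-e))" by simp
    also have "\<dots> \<le> (4*\<eta> + A) * k" by (rule mult_left_mono[OF kk]) (use nn in simp)
    finally show ?thesis by (simp add: mult.commute)
  qed
  finally have "err \<le> T' + k*(4*\<eta>) + k*A" using c by (simp add: algebra_simps)
  also have "k*A \<le> k*(k*(2*(P+T') + 2*\<eta>*W2))" using h1 kpos by (intro mult_left_mono) auto
  finally have E: "err \<le> T' + 4*k*\<eta> + k*k*(2*P + 2*T' + 2*\<eta>*W2)" by (simp add: algebra_simps)
  have kk: "k \<le> k*k" "1 \<le> k*k" using k1 mult_mono[OF k1 k1] by (auto intro: mult_left_le_imp_le simp: mult_le_cancel_left1)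
  have f1: "T' \<le> 2*(k*k)*T'" using kk nn mult_right_mono[OF kk(2), of T'] by linarith
  have f2: "4*k*\<eta> \<le> 4*(k*k)*\<eta>" using kk nn by (intro mult_right_mono) auto
  have f3: "0 \<le> k*k*P" "0 \<le> k*k*(\<eta>*W2)" using nn by auto
  have "err \<le> 4*(k*k)*((1+W2)*\<eta> + P + T')"
    using E f1 f2 f3 by (simp add: algebra_simps)
  moreover have "4/(1-2*e)^2 = 4*(k*k)" by (simp add: k_def power2_eq_square)
  ultimately show ?thesis by simp
qed



lemma summable_fin: "(\<And>i. L \<le> i \<Longrightarrow> f i = 0) \<Longrightarrow> summable (f :: nat \<Rightarrow> real)"
  by (rule sums_summable[OF sums_finite[of "{..<L}"]]) (auto simp: not_less)

lemma wl1_fin: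
  assumes "supported_in K z" "K \<le> L"
  shows "wl1norm w z = (\<Sum>i<L. w i * cmod (z i))"
  unfolding wl1norm_def using assms by (intro suminf_finite) (auto simp: supported_in_def)

lemma summ_diff:
  assumes sx: "summable (\<lambda>i. w i * cmod (x i))" and w0: "\<And>i. 0 \<le> w i" and supp: "supported_in K xb"
  shows "summable (\<lambda>i. w i * cmod (x i - xb i))"
proof (rule summable_comparison_test[OF _ summable_add[OF sx summable_fin[of K "\<lambda>i. w i * cmod (xb i)"]]])
  show "\<exists>N. \<forall>n\<ge>N. norm (w n * cmod (x n - xb n)) \<le> w n * cmod (x n) + w n * cmod (xb n)"
    using w0 by (auto simp: abs_mult distrib_left[symmetric] intro!: mult_left_mono norm_triangle_ineq4)
qed (use supp in \<open>auto simp: supported_in_def\<close>)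




lemma div_le_self1: "0 \<le> (a::real) \<Longrightarrow> 1 \<le> b \<Longrightarrow> a / b \<le> a"
proof -
  assume a: "0 \<le> a" and b: "1 \<le> b"
  have "a * 1 \<le> a * b" using mult_left_mono[OF b a] .
  then show ?thesis using b by (simp add: divide_le_eq)
qed

lemma suminf_ht:
  assumes "summable (f::nat\<Rightarrow>real)"
  shows "suminf f = (\<Sum>i<M. f i) + (\<Sum>i. if i < M then 0 else f i)"
proof -
  have sh: "summable (\<lambda>i. if i < M then f i else 0)" by (rule summable_fin[of M]) simp
  have e: "(\<lambda>i. if i < M then 0 else f i) = (\<lambda>i. f i - (if i < M then f i else 0))" by auto
  have "(\<Sum>i. if i < M then 0 else f i) = suminf f - (\<Sum>i. if i < M then f i else 0)"
    unfolding e by (rule suminf_diff[OF assms sh, symmetric])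
  moreover have "(\<Sum>i. if i < M then f i else 0) = (\<Sum>i<M. f i)" by (subst suminf_finite[of "{..<M}"]) auto
  ultimately show ?thesis by simp
qed

lemma main_fixed:
  fixes D :: "'a::euclidean_space set" and \<nu> :: "'a \<Rightarrow> real" and \<phi> :: "nat \<Rightarrow> 'a \<Rightarrow> complex"
    and z :: "nat \<Rightarrow> real" and t :: "nat \<Rightarrow> 'a" and M R K N :: nat and x xh y :: "nat \<Rightarrow> complex"
    and w :: "nat \<Rightarrow> real" and U :: "nat \<Rightarrow> nat \<Rightarrow> complex"
  assumes wdef: "w = (\<lambda>i. z i * supnorm_on (closure D) (\<phi> i))"
   and Udef: "U = Umat D \<nu> \<phi> N t"
   and eps: "0 < eps" "eps < 1/2"
   and Dne: "D \<noteq> {}"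
   and nu0: "\<forall>s\<in>D. 0 \<le> \<nu> s" and nuint: "set_integrable lebesgue D \<nu>" and nu1: "(LINT s:D|lebesgue. \<nu> s) = 1"
   and bd: "\<forall>i. bounded (\<phi> i ` closure D)" and on: "orthonormal_L2 D \<nu> \<phi>"
   and z1: "\<forall>i. 1 \<le> z i"
   and tD: "\<forall>n<N. t n \<in> closure D"
   and sx: "summable (\<lambda>i. w i * cmod (x i))"
   and MR: "0 < M" "M < R"
   and EM: "Eq U N M < eps"
   and ER: "Eq U N R < eps * Min (w ` {M..<R}) / Max (w ` {..<M})"
   and FF: "Fq U N w M R \<le> eps / Max (w ` {..<M})"
   and mini: "is_wl1_minimizer U N w K \<eta> y xh"
  shows "seq_l2norm (\<lambda>i. x i - xh i) \<le> 4 / (1 - 2*eps)^2 *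
     ((1 + seq_l2norm (\<lambda>i. if i < M then complex_of_real (w i) else 0)) * \<eta>
      + wl1norm w (\<lambda>i. if i < M then 0 else x i) + Tq U N w K \<eta> y x)"
proof -
  define G where "G = gram U N"
  have hG: "\<And>i j. G i j = (\<Sum>n<N. cnj (U n i) * U n j)" by (simp add: G_def gram_def)
  define s where "s i = supnorm_on (closure D) (\<phi> i)" for i
  have s1: "1 \<le> s i" for i unfolding s_def using supnorm_ge1[OF bd[rule_format] on nu0 nuint nu1 Dne] .
  have w_eq: "w i = z i * s i" for i by (simp add: wdef s_def)
  have w1: "1 \<le> w i" for i
  proof -
    have zi: "1 \<le> z i" using z1 by simp
    have "1 * 1 \<le> z i * s i" by (rule mult_mono) (use zi s1[of i] in auto)
    then show ?thesis by (simp add: w_eq)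
  qed
  have w0: "0 \<le> w i" for i using w1[of i] by simp
  have wpos: "0 < w i" for i using w1[of i] by simp
  have sw: "s i \<le> w i" for i using mult_right_mono[OF z1[rule_format] order_trans[OF zero_le_one s1], of i i]
    by (simp add: w_eq)
  define mw where "mw = Max (w ` {..<M})"
  define nw where "nw = Min (w ` {M..<R})"
  have mwge: "w j \<le> mw" if "j < M" for j unfolding mw_def using that by (intro Max_ge) auto
  have mw1: "1 \<le> mw" using mwge[OF MR(1)] w1[of 0] by simp
  have nwle: "nw \<le> w i" if "M \<le> i" "i < R" for i unfolding nw_def using that by (intro Min_le) auto
  have E2M: "E2 U N M < eps" and EiM: "Einf U N M < eps" using EM by (simp_all add: Eq_def)
  have E2R: "E2 U N R < eps * nw / mw" and EiR: "Einf U N R < eps * nw / mw"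
    using ER by (simp_all add: Eq_def nw_def mw_def)
  have FF': "Fq U N w M R \<le> eps / mw" using FF by (simp add: mw_def)
  have nwmw: "eps * nw / mw \<le> eps * w i" if "M \<le> i" "i < R" for i
  proof -
    have "nw \<in> w ` {M..<R}" unfolding nw_def using MR by (intro Min_in) auto
    then have "1 \<le> nw" using w1 by auto
    then have p: "0 \<le> eps * nw" using eps by simp
    have "eps * nw \<le> eps * nw * mw" using mult_left_mono[OF mw1 p] by simp
    then have "eps * nw / mw \<le> eps * nw" using mw1 by (simp add: divide_le_eq)
    also have "\<dots> \<le> eps * w i" using eps nwle[OF that] by simp
    finally show ?thesis .
  qed
  have A1: "L2_set (\<lambda>i. cmod (b i - (\<Sum>j<M. G i j * b j))) {..<M} \<le> eps * L2_set (\<lambda>j. cmod (b j)) {..<M}" for b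
  proof -
    have "L2_set (\<lambda>i. cmod (b i - (\<Sum>j<M. G i j * b j))) {..<M} \<le> E2 U N M * L2_set (\<lambda>j. cmod (b j)) {..<M}"
      using E2_bound[where b=b and M=M and G="gram U N"] by (simp add: E2_def G_def)
    also have "\<dots> \<le> eps * L2_set (\<lambda>j. cmod (b j)) {..<M}" using E2M by (intro mult_right_mono) auto
    finally show ?thesis .
  qed
  have A2: "cmod (b i - (\<Sum>j<M. G i j * b j)) \<le> eps * m"
    if bm: "\<And>j. j<M \<Longrightarrow> cmod (b j) \<le> m" and i: "i < M" for b m i
  proof -
    have m0: "0 \<le> m" using bm[OF i] norm_ge_zero order_trans by blast
    have "cmod (b i - (\<Sum>j<M. G i j * b j)) \<le> Einf U N M * m"
      using Einf_bound[where M=M and b=b and m=m and i=i and G="gram U N", OF bm i] by (simp add: Einf_def G_def)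
    also have "\<dots> \<le> eps * m" using EiM m0 by (intro mult_right_mono) auto
    finally show ?thesis .
  qed
  define q where "q n = \<bar>sqrt (qweight D \<nu> N t n)\<bar>" for n
  have Ub: "cmod (U n i) \<le> q n * s i" if "n < N" for n i
  proof -
    have bdd: "bdd_above ((\<lambda>s. cmod (\<phi> i s)) ` closure D)"
      using bd unfolding bounded_iff bdd_above_def by fastforce
    have "cmod (\<phi> i (t n)) \<le> s i" unfolding s_def supnorm_on_def
      using tD that by (intro cSUP_upper[OF _ bdd]) auto
    then show ?thesis unfolding Udef Umat_def q_def by (simp add: norm_mult mult_left_mono)
  qed
  define Bd0 where "Bd0 = (\<Sum>j<M. \<Sum>n<N. q n * cmod (U n j))"
  have Bd00: "0 \<le> Bd0" unfolding Bd0_def q_def by (intro sum_nonneg mult_nonneg_nonneg) auto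
  have GB: "cmod (G i j) \<le> Bd0 * w i" if "j < M" for i j
  proof -
    have "cmod (G i j) \<le> (\<Sum>n<N. cmod (U n i) * cmod (U n j))"
      unfolding hG by (rule order_trans[OF norm_sum]) (simp add: norm_mult)
    also have "\<dots> \<le> (\<Sum>n<N. (q n * s i) * cmod (U n j))"
      using Ub by (intro sum_mono mult_right_mono) auto
    also have "\<dots> = s i * (\<Sum>n<N. q n * cmod (U n j))" by (simp add: sum_distrib_left mult_ac)
    also have "\<dots> \<le> w i * Bd0"
    proof (rule mult_mono[OF sw])
      show "(\<Sum>n<N. q n * cmod (U n j)) \<le> Bd0" unfolding Bd0_def using that
        by (intro member_le_sum[of j "{..<M}" "\<lambda>j. \<Sum>n<N. q n * cmod (U n j)"])
           (auto simp: q_def intro!: sum_nonneg)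
    qed (use w0 s1 order_trans[OF zero_le_one] in \<open>auto simp: q_def intro!: sum_nonneg\<close>)
    finally show ?thesis by (simp add: mult.commute)
  qed
  have A3: "cmod (\<Sum>j<M. G i j * b j) \<le> eps / mw * w i * m"
    if bm: "\<And>j. j<M \<Longrightarrow> cmod (b j) \<le> m" and i: "M \<le> i" for b m i
  proof -
    have m0: "0 \<le> m" using bm[OF MR(1)] norm_ge_zero order_trans by blast
    show ?thesis
    proof (cases "R \<le> i")
      case True
      have "cmod (\<Sum>j<M. G i j * b j) \<le> Fq U N w M R * w i * m"
        using F_bound[where w=w and M=M and G="gram U N" and Bnd=Bd0 and b=b and m=m and R=R and i=i, OF wpos GB[unfolded G_def] Bd00 bm m0 True] by (simp add: Fq_def G_def)
      also have "\<dots> \<le> eps / mw * w i * m" using FF' w0[of i] m0 by (intro mult_right_mono) auto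
      finally show ?thesis .
    next
      case False
      define b' where "b' j = (if j < M then b j else 0)" for j
      have bm': "cmod (b' j) \<le> m" if "j < R" for j using bm m0 by (simp add: b'_def)
      have "cmod (b' i - (\<Sum>j<R. G i j * b' j)) \<le> Einf U N R * m"
        using Einf_bound[where M=R and b=b' and m=m and i=i and G="gram U N", OF bm'] False by (simp add: Einf_def G_def)
      moreover have "b' i - (\<Sum>j<R. G i j * b' j) = - (\<Sum>j<M. G i j * b j)"
      proof -
        have "(\<Sum>j<R. G i j * b' j) = (\<Sum>j<M. G i j * b' j) + (\<Sum>j\<in>{M..<R}. G i j * b' j)"
          using MR by (intro split_sum) simp
        then show ?thesis using i by (simp add: b'_def)
      qed
      ultimately have "cmod (\<Sum>j<M. G i j * b j) \<le> Einf U N R * m" by simp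
      also have "\<dots> \<le> eps * nw / mw * m" using EiR m0 by (intro mult_right_mono) auto
      also have "\<dots> \<le> eps / mw * w i * m"
        using nwle[OF i] False eps mw1 m0 by (intro mult_right_mono) (auto simp: divide_right_mono)
      finally show ?thesis .
    qed
  qed
  have Gsym: "G j i = cnj (G i j)" for i j by (simp add: hG mult.commute)
  have A4: "L2_set (\<lambda>j. cmod (G j i)) {..<M} \<le> eps * w i" if i: "M \<le> i" for i
  proof (cases "R \<le> i")
    case True
    define b where "b j = cnj (sgn (G i j))" for j
    have "L2_set (\<lambda>j. cmod (G j i)) {..<M} \<le> (\<Sum>j<M. cmod (G j i))" by (rule L2_set_le_sum) simp
    also have "\<dots> = cmod (\<Sum>j<M. G i j * b j)"
    proof -
      have e1: "(\<Sum>j<M. G i j * b j) = of_real (\<Sum>j<M. cmod (G i j))"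
        unfolding b_def using sgn_facts(2) by (simp add: mult.commute)
      have e2: "cmod (\<Sum>j<M. G i j * b j) = (\<Sum>j<M. cmod (G i j))"
        unfolding e1 norm_of_real by (rule abs_of_nonneg[OF sum_nonneg]) simp
      have "cmod (G j i) = cmod (G i j)" for j by (subst Gsym) simp
      then show ?thesis unfolding e2 by simp
    qed
    also have "\<dots> \<le> eps / mw * w i * 1"
      by (rule A3[OF _ i]) (simp add: b_def sgn_facts(1))
    also have "\<dots> \<le> eps * w i" using div_le_self1[of "eps * w i" mw] mw1 eps w0[of i] by simp
    finally show ?thesis .
  next
    case False
    define b where "b j = (if j = i then 1 else 0 :: complex)" for j
    have bsum: "(\<Sum>k<R. G j k * b k) = G j i" for j
    proof -
      have "(\<Sum>k<R. G j k * b k) = (\<Sum>k<R. if k = i then G j k else 0)"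
        by (intro sum.cong) (auto simp: b_def)
      also have "\<dots> = G j i" using False by simp
      finally show ?thesis .
    qed
    have "L2_set (\<lambda>j. cmod (G j i)) {..<M} = L2_set (\<lambda>j. cmod (b j - (\<Sum>k<R. G j k * b k))) {..<M}"
    proof (intro L2_set_cong)
      fix j assume "j \<in> {..<M}"
      then have "b j = 0" using i by (simp add: b_def)
      then show "cmod (G j i) = cmod (b j - (\<Sum>k<R. G j k * b k))" by (simp only: bsum) simp
    qed simp
    also have "\<dots> \<le> L2_set (\<lambda>j. cmod (b j - (\<Sum>k<R. G j k * b k))) {..<R}"
      unfolding L2_set_def using MR by (intro real_sqrt_le_mono sum_mono2) auto
    also have "\<dots> \<le> E2 U N R * L2_set (\<lambda>j. cmod (b j)) {..<R}"
      using E2_bound[where b=b and M=R and G="gram U N"] by (simp add: E2_def G_def)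
    also have "L2_set (\<lambda>j. cmod (b j)) {..<R} = 1"
    proof -
      have "(\<Sum>j<R. (cmod (b j))\<^sup>2) = (\<Sum>j<R. if j = i then 1 else 0)"
        by (intro sum.cong) (auto simp: b_def)
      also have "\<dots> = 1" using False by simp
      finally show ?thesis unfolding L2_set_def by simp
    qed
    also have "E2 U N R * 1 \<le> eps * w i" using E2R nwmw[OF i] False by simp
    finally show ?thesis .
  qed

  have xh_s: "supported_in K xh" and xh_r: "resid U N K xh y \<le> \<eta>"
    and xh_m: "\<And>zz. supported_in K zz \<Longrightarrow> resid U N K zz y \<le> \<eta> \<Longrightarrow> wl1norm w xh \<le> wl1norm w zz"
    using mini unfolding is_wl1_minimizer_def by auto
  have "0 \<le> resid U N K xh y" unfolding resid_def by (simp add: sum_nonneg)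
  then have eta0: "0 \<le> \<eta>" using xh_r by linarith
  have wc: "c \<le> w i * c" if "0 \<le> c" for i c using mult_right_mono[OF w1 that] by simp
  define L where "L = K + M"
  have KL: "K \<le> L" "M \<le> L" by (simp_all add: L_def)
  define Sset where "Sset = {wl1norm w (\<lambda>i. x i - xb i) | xb. supported_in K xb \<and> resid U N K xb y \<le> \<eta>}"
  have Tq_eq: "Tq U N w K \<eta> y x = Inf Sset" by (simp add: Tq_def Sset_def)
  have Sne: "Sset \<noteq> {}" using xh_s xh_r unfolding Sset_def by blast
  have wl1_nn: "0 \<le> wl1norm w (\<lambda>i. x i - xb i)" if "supported_in K xb" for xb
    unfolding wl1norm_def using summ_diff[OF sx w0 that] w0 by (intro suminf_nonneg) auto
  define W2 where "W2 = L2_set w {..<M}"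
  have W20: "0 \<le> W2" by (simp add: W2_def)
  have W2eq: "seq_l2norm (\<lambda>i. if i < M then complex_of_real (w i) else 0) = W2"
  proof -
    have "seq_l2norm (\<lambda>i. if i < M then complex_of_real (w i) else 0)
        = L2_set (\<lambda>i. cmod (if i < M then complex_of_real (w i) else 0)) {..<M}" by (rule l2_fin) simp
    also have "\<dots> = W2" unfolding W2_def using w0 by (intro L2_set_cong) auto
    finally show ?thesis .
  qed
  define P where "P = wl1norm w (\<lambda>i. if i < M then 0 else x i)"
  have sP: "summable (\<lambda>i. w i * cmod (if i < M then 0 else x i))"
    by (rule summable_comparison_test[OF _ sx]) (auto simp: w0)
  have P0: "0 \<le> P" unfolding P_def wl1norm_def using sP w0 by (intro suminf_nonneg) auto
  define C where "C = 4 / (1 - 2*eps)^2"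
  have Cpos: "0 < C" using eps by (simp add: C_def)
  have key: "seq_l2norm (\<lambda>i. x i - xh i) \<le> C * ((1 + W2) * \<eta> + P + Tq U N w K \<eta> y x) + C * \<delta>"
    if \<delta>: "0 < \<delta>" for \<delta>
  proof -
    obtain T' where T'S: "T' \<in> Sset" and T'lt: "T' < Tq U N w K \<eta> y x + \<delta>"
      using cInf_lessD[OF Sne, of "Tq U N w K \<eta> y x + \<delta>"] \<delta> unfolding Tq_eq by auto
    then obtain xb where xb_s: "supported_in K xb" and xb_r: "resid U N K xb y \<le> \<eta>"
      and T'eq: "T' = wl1norm w (\<lambda>i. x i - xb i)"
      unfolding Sset_def by blast
    have hsupp: "xh i = 0" "xb i = 0" if "K \<le> i" for i using xh_s xb_s that by (auto simp: supported_in_def)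
    define r1 where "r1 n = (\<Sum>i<K. U n i * xh i) - y n" for n
    define r2 where "r2 n = (\<Sum>i<K. U n i * xb i) - y n" for n
    have rr: "(\<Sum>i<L. U n i * (xh i - xb i)) = r1 n - r2 n" for n
    proof -
      have "(\<Sum>i<L. U n i * (xh i - xb i)) = (\<Sum>i<K. U n i * (xh i - xb i)) + (\<Sum>i\<in>{K..<L}. U n i * (xh i - xb i))"
        by (rule split_sum[OF KL(1)])
      also have "(\<Sum>i\<in>{K..<L}. U n i * (xh i - xb i)) = 0" by (intro sum.neutral) (auto simp: hsupp)
      finally show ?thesis by (simp add: r1_def r2_def algebra_simps sum_subtractf)
    qed
    have res: "L2_set (\<lambda>n. cmod (\<Sum>i<L. U n i * (xh i - xb i))) {..<N} \<le> 2 * \<eta>"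
    proof -
      have "L2_set (\<lambda>n. cmod (\<Sum>i<L. U n i * (xh i - xb i))) {..<N} \<le> L2_set (\<lambda>n. cmod (r1 n) + cmod (r2 n)) {..<N}"
        unfolding rr by (rule L2_set_mono) (auto intro: norm_triangle_ineq4)
      also have "\<dots> \<le> L2_set (\<lambda>n. cmod (r1 n)) {..<N} + L2_set (\<lambda>n. cmod (r2 n)) {..<N}"
        by (rule L2_set_triangle_ineq)
      finally have "L2_set (\<lambda>n. cmod (\<Sum>i<L. U n i * (xh i - xb i))) {..<N}
          \<le> L2_set (\<lambda>n. cmod (r1 n)) {..<N} + L2_set (\<lambda>n. cmod (r2 n)) {..<N}" .
      moreover have "L2_set (\<lambda>n. cmod (r1 n)) {..<N} = resid U N K xh y" by (simp add: resid_def L2_set_def r1_def)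
      moreover have "L2_set (\<lambda>n. cmod (r2 n)) {..<N} = resid U N K xb y" by (simp add: resid_def L2_set_def r2_def)
      ultimately show ?thesis using xh_r xb_r by linarith
    qed
    have minim: "(\<Sum>i<L. w i * cmod (xh i)) \<le> (\<Sum>i<L. w i * cmod (xb i))"
      using xh_m[OF xb_s xb_r] wl1_fin[OF xh_s KL(1)] wl1_fin[OF xb_s KL(1)] by simp
    define A where "A = (\<Sum>i\<in>{M..<L}. w i * cmod (xh i - xb i))"
    define B where "B = (\<Sum>i\<in>{M..<L}. w i * cmod (xb i))"
    define PV where "PV = L2_set (\<lambda>i. cmod (xh i - xb i)) {..<M}"
    have A0: "0 \<le> A" unfolding A_def using w0 by (intro sum_nonneg) simp
    have ca: "(1 - 2*eps) * A \<le> 2*(1-eps) * B + 2 * \<eta> * W2"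
      unfolding A_def B_def W2_def
      by (rule core_cone[OF hG eps MR(1) KL(2) w1 mwge A1 A2 A3 res minim])
    have cb: "(1-eps) * PV \<le> 4*\<eta> + eps * A"
      unfolding A_def PV_def by (rule core_b[OF hG eps KL(2) w0 A1 A4 res])
    define d where "d i = x i - xb i" for i
    have sd: "summable (\<lambda>i. w i * cmod (d i))" unfolding d_def by (rule summ_diff[OF sx w0 xb_s])
    have T'eq2: "T' = (\<Sum>i. w i * cmod (d i))" using T'eq by (simp add: wl1norm_def d_def)
    have T'0: "0 \<le> T'" using T'eq wl1_nn[OF xb_s] by simp
    define u where "u i = x i - xh i" for i
    have su: "summable (\<lambda>i. cmod (u i))"
      by (rule summable_comparison_test[OF _ summ_diff[OF sx w0 xh_s]]) (auto simp: u_def intro!: wc)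
    have err1: "seq_l2norm u \<le> L2_set (\<lambda>i. cmod (u i)) {..<M} + (\<Sum>i. if i < M then 0 else cmod (u i))"
      by (rule l2_split_bound[OF su])
    have uv: "u i = d i - (xh i - xb i)" for i by (simp add: u_def d_def)
    have head1: "L2_set (\<lambda>i. cmod (u i)) {..<M} \<le> L2_set (\<lambda>i. cmod (d i)) {..<M} + PV"
    proof -
      have "L2_set (\<lambda>i. cmod (u i)) {..<M} \<le> L2_set (\<lambda>i. cmod (d i) + cmod (xh i - xb i)) {..<M}"
        unfolding uv by (rule L2_set_mono) (auto intro: norm_triangle_ineq4)
      also have "\<dots> \<le> L2_set (\<lambda>i. cmod (d i)) {..<M} + PV" unfolding PV_def by (rule L2_set_triangle_ineq)
      finally show ?thesis .
    qed
    have head2: "L2_set (\<lambda>i. cmod (d i)) {..<M} \<le> (\<Sum>i<M. cmod (d i))" by (rule L2_set_le_sum) simp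
    have head3: "(\<Sum>i<M. cmod (d i)) \<le> (\<Sum>i<M. w i * cmod (d i))" by (intro sum_mono wc) simp
    define tv where "tv i = (if i < M then 0 else cmod (xh i - xb i))" for i
    define td where "td i = (if i < M then 0 else w i * cmod (d i))" for i
    have std: "summable td" unfolding td_def by (rule summable_comparison_test[OF _ sd]) (auto simp: w0)
    have stv: "summable tv" by (rule summable_fin[of L]) (use KL in \<open>simp add: tv_def hsupp\<close>)
    have tail1: "(\<Sum>i. if i < M then 0 else cmod (u i)) \<le> (\<Sum>i. td i + tv i)"
    proof (rule suminf_le)
      fix i
      have "cmod (u i) \<le> cmod (d i) + cmod (xh i - xb i)" unfolding uv by (rule norm_triangle_ineq4)
      moreover have "cmod (d i) \<le> w i * cmod (d i)" by (rule wc) simp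
      ultimately show "(if i < M then 0 else cmod (u i)) \<le> td i + tv i" by (simp add: td_def tv_def)
    next
      show "summable (\<lambda>i. if i < M then 0 else cmod (u i))"
        by (rule summable_comparison_test[OF _ su]) auto
      show "summable (\<lambda>i. td i + tv i)" by (rule summable_add[OF std stv])
    qed
    have tail2: "(\<Sum>i. td i + tv i) = suminf td + suminf tv" by (rule suminf_add[OF std stv, symmetric])
    have tail3: "suminf tv = (\<Sum>i\<in>{M..<L}. cmod (xh i - xb i))"
      unfolding tv_def by (subst suminf_finite[of "{M..<L}"]) (auto simp: hsupp L_def)
    have tail4: "(\<Sum>i\<in>{M..<L}. cmod (xh i - xb i)) \<le> A" unfolding A_def by (intro sum_mono wc) simp
    have Tsplit: "T' = (\<Sum>i<M. w i * cmod (d i)) + suminf td"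
      unfolding T'eq2 td_def by (rule suminf_ht[OF sd])
    have errb: "seq_l2norm (\<lambda>i. x i - xh i) \<le> T' + PV + A"
      using err1 head1 head2 head3 tail1 tail2 tail3 tail4 Tsplit unfolding u_def by linarith
    have Bb: "B \<le> P + T'"
    proof -
      have "B \<le> (\<Sum>i\<in>{M..<L}. w i * cmod (if i < M then 0 else x i) + w i * cmod (d i))"
        unfolding B_def
      proof (rule sum_mono)
        fix i assume "i \<in> {M..<L}"
        then have "\<not> i < M" by simp
        have "cmod (xb i) \<le> cmod (x i) + cmod (d i)" unfolding d_def by (metis add.commute diff_add_cancel norm_triangle_ineq4 norm_minus_commute norm_triangle_sub) 
        then have "w i * cmod (xb i) \<le> w i * (cmod (x i) + cmod (d i))" by (rule mult_left_mono) (rule w0)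
        then show "w i * cmod (xb i) \<le> w i * cmod (if i < M then 0 else x i) + w i * cmod (d i)"
          using \<open>\<not> i < M\<close> by (simp add: distrib_left)
      qed
      also have "\<dots> = (\<Sum>i\<in>{M..<L}. w i * cmod (if i < M then 0 else x i)) + (\<Sum>i\<in>{M..<L}. w i * cmod (d i))"
        by (rule sum.distrib)
      finally have b1: "B \<le> (\<Sum>i\<in>{M..<L}. w i * cmod (if i < M then 0 else x i)) + (\<Sum>i\<in>{M..<L}. w i * cmod (d i))" .
      have b2: "(\<Sum>i\<in>{M..<L}. w i * cmod (if i < M then 0 else x i)) \<le> P"
        unfolding P_def wl1norm_def by (rule sum_le_suminf[OF sP]) (auto simp: w0)
      have b3: "(\<Sum>i\<in>{M..<L}. w i * cmod (d i)) \<le> T'"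
        unfolding T'eq2 by (rule sum_le_suminf[OF sd]) (auto simp: w0)
      show ?thesis using b1 b2 b3 by linarith
    qed
    have fa: "seq_l2norm (\<lambda>i. x i - xh i) \<le> C * ((1+W2)*\<eta> + P + T')"
      unfolding C_def by (rule final_arith[OF eps eta0 W20 A0 P0 T'0 ca cb errb Bb])
    have "C * ((1+W2)*\<eta> + P + T') \<le> C * ((1+W2)*\<eta> + P + (Tq U N w K \<eta> y x + \<delta>))"
      using T'lt Cpos by (intro mult_left_mono) auto
    with fa show ?thesis by (simp add: algebra_simps)
  qed
  have "seq_l2norm (\<lambda>i. x i - xh i) \<le> C * ((1 + W2) * \<eta> + P + Tq U N w K \<eta> y x)"
  proof (rule field_le_epsilon)
    fix e :: real assume "0 < e"
    then have "0 < e / C" using Cpos by simp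
    from key[OF this] show "seq_l2norm (\<lambda>i. x i - xh i) \<le> C * ((1 + W2) * \<eta> + P + Tq U N w K \<eta> y x) + e"
      using Cpos by simp
  qed
  then show ?thesis unfolding W2eq P_def[symmetric] C_def[symmetric] .
qed




theorem theorem5p6:
  "\<exists>C :: real \<Rightarrow> real. (C \<longlongrightarrow> 4) (at_right 0) \<and>
    (\<forall>(\<epsilon>::real) (D :: 'a::euclidean_space set) (\<nu> :: 'a \<Rightarrow> real) (\<phi> :: nat \<Rightarrow> 'a \<Rightarrow> complex)
       (z :: nat \<Rightarrow> real) (N::nat) (t :: nat \<Rightarrow> 'a) (M::nat) (R::nat) (K::nat)
       (x :: nat \<Rightarrow> complex) (e :: nat \<Rightarrow> complex) (\<eta>::real) (xh :: nat \<Rightarrow> complex).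
     let w = (\<lambda>i. z i * supnorm_on (closure D) (\<phi> i));
         U = Umat D \<nu> \<phi> N t;
         f = (\<lambda>s. \<Sum>i. x i * \<phi> i s);
         y = (\<lambda>n. complex_of_real (sqrt (qweight D \<nu> N t n)) * (f (t n) + e n))
     in
     0 < \<epsilon> \<longrightarrow> \<epsilon> < 1/2 \<longrightarrow>
     open D \<longrightarrow> connected D \<longrightarrow> D \<noteq> {} \<longrightarrow>
     (\<forall>s\<in>D. 0 \<le> \<nu> s) \<longrightarrow> set_integrable lebesgue D \<nu> \<longrightarrow> (LINT s:D|lebesgue. \<nu> s) = 1 \<longrightarrow>
     (\<forall>i. set_borel_measurable lebesgue D (\<phi> i)) \<longrightarrow>
     (\<forall>i. bounded (\<phi> i ` closure D)) \<longrightarrow>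
     orthonormal_L2 D \<nu> \<phi> \<longrightarrow>
     (\<forall>i. 1 \<le> z i) \<longrightarrow> filterlim z at_top sequentially \<longrightarrow>
     0 < N \<longrightarrow> (\<forall>n<N. t n \<in> closure D) \<longrightarrow> 0 < pt_density D N t \<longrightarrow>
     summable (\<lambda>i. w i * cmod (x i)) \<longrightarrow>
     (\<forall>n<N. cmod (e n) \<le> \<eta>) \<longrightarrow>
     0 < M \<longrightarrow> M < R \<longrightarrow>
     Eq U N M < \<epsilon> \<longrightarrow>
     Eq U N R < \<epsilon> * Min (w ` {M..<R}) / Max (w ` {..<M}) \<longrightarrow>
     Fq U N w M R \<le> \<epsilon> / Max (w ` {..<M}) \<longrightarrow>
     is_wl1_minimizer U N w K \<eta> y xh \<longrightarrow>
     seq_l2norm (\<lambda>i. x i - xh i)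
       \<le> C \<epsilon> * ((1 + seq_l2norm (\<lambda>i. if i < M then complex_of_real (w i) else 0)) * \<eta>
                  + wl1norm w (\<lambda>i. if i < M then 0 else x i)
                  + Tq U N w K \<eta> y x))"
proof -
  define C where "C = (\<lambda>e::real. 4 / (1 - 2*e)^2)"
  have "((\<lambda>e::real. 4 / (1 - 2*e)^2) \<longlongrightarrow> 4 / (1 - 2*0)^2) (at_right 0)"
    by (intro tendsto_intros) auto
  then have lim: "(C \<longlongrightarrow> 4) (at_right 0)" by (simp add: C_def)
  show ?thesis
  proof (rule exI[of _ C], intro conjI lim allI)
    fix \<epsilon> :: real and D :: "'a::euclidean_space set" and \<nu> :: "'a \<Rightarrow> real" and \<phi> :: "nat \<Rightarrow> 'a \<Rightarrow> complex"
      and z :: "nat \<Rightarrow> real" and N :: nat and t :: "nat \<Rightarrow> 'a" and M R K :: nat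
      and x e :: "nat \<Rightarrow> complex" and \<eta> :: real and xh :: "nat \<Rightarrow> complex"
    show "let w = (\<lambda>i. z i * supnorm_on (closure D) (\<phi> i));
         U = Umat D \<nu> \<phi> N t;
         f = (\<lambda>s. \<Sum>i. x i * \<phi> i s);
         y = (\<lambda>n. complex_of_real (sqrt (qweight D \<nu> N t n)) * (f (t n) + e n))
     in
     0 < \<epsilon> \<longrightarrow> \<epsilon> < 1/2 \<longrightarrow>
     open D \<longrightarrow> connected D \<longrightarrow> D \<noteq> {} \<longrightarrow>
     (\<forall>s\<in>D. 0 \<le> \<nu> s) \<longrightarrow> set_integrable lebesgue D \<nu> \<longrightarrow> (LINT s:D|lebesgue. \<nu> s) = 1 \<longrightarrow>
     (\<forall>i. set_borel_measurable lebesgue D (\<phi> i)) \<longrightarrow>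
     (\<forall>i. bounded (\<phi> i ` closure D)) \<longrightarrow>
     orthonormal_L2 D \<nu> \<phi> \<longrightarrow>
     (\<forall>i. 1 \<le> z i) \<longrightarrow> filterlim z at_top sequentially \<longrightarrow>
     0 < N \<longrightarrow> (\<forall>n<N. t n \<in> closure D) \<longrightarrow> 0 < pt_density D N t \<longrightarrow>
     summable (\<lambda>i. w i * cmod (x i)) \<longrightarrow>
     (\<forall>n<N. cmod (e n) \<le> \<eta>) \<longrightarrow>
     0 < M \<longrightarrow> M < R \<longrightarrow>
     Eq U N M < \<epsilon> \<longrightarrow>
     Eq U N R < \<epsilon> * Min (w ` {M..<R}) / Max (w ` {..<M}) \<longrightarrow>
     Fq U N w M R \<le> \<epsilon> / Max (w ` {..<M}) \<longrightarrow>
     is_wl1_minimizer U N w K \<eta> y xh \<longrightarrow>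
     seq_l2norm (\<lambda>i. x i - xh i)
       \<le> C \<epsilon> * ((1 + seq_l2norm (\<lambda>i. if i < M then complex_of_real (w i) else 0)) * \<eta>
                  + wl1norm w (\<lambda>i. if i < M then 0 else x i)
                  + Tq U N w K \<eta> y x)"
      unfolding Let_def C_def
      by (intro impI, rule main_fixed[OF refl refl]; assumption)
  qed
qed



end
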